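(* Let $(M^n,c,v^m d\nu)$ be a smooth conformal measure space with characteristic constant $\mu$, $n\ge3$, $m\in\mathbb{R}\setminus\{-n,1-n,2-n\}$. For every $w\in\mathbb{R}$ and $\sigma\in\mathcal{E}[w]$, $$(n+2w-2)\mathbb{D}^W\sigma-(m+n+2w-2)\mathbb{D}\sigma=-mv^{-1}\Big\langle\mathbb{D}\sigma,\ J+\frac{\mu-(m-1)|J|^2}{2(m+n-1)v}X\Big\rangle X.$$ In particular, $\mathbb{D}^W$ is a well-defined operator $\mathcal{E}[w]\to\mathcal{T}[w-1]$ (independent of the choice of scale).
   Context: Conformal setting: $(M^n,c)$ a manifold with a conformal class of Riemannian metrics. $\mathcal{E}[w]$: conformal densities of weight $w$ (functions in a scale $g\in c$, multiplied by $e^{ws}$ under $g\mapsto e^{2s}g$). Standard tractor bundle $\mathbb{T}$: in a scale $\mathbb{T}\cong\mathbb{R}\oplus TM\oplus\mathbb{R}$, tractor $I$ with top $\sigma$, middle $\omega$, bottom $\rho$, transforming as $\sigma\mapsto e^{s}\sigma$, $\omega\mapsto e^{-s}(\omega+\sigma\nabla s)$, $\rho\mapsto e^{-s}(\rho-g(\nabla s,\omega)-\tfrac12|\nabla s|^2\sigma)$; $\mathcal{T}[w]$ denotes weight-$w$ tractor sections. Tractor metric $\langle I,I\rangle=2\sigma\rho+|\omega|_g^2$. $X\in\mathcal{T}[1]$: top and middle $0$, bottom $1$. Schouten $P=\frac1{n-2}(\mathrm{Ric}-\mathrm{J}g)$, $\mathrm{J}=\operatorname{tr}P$. Tractor-$D$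 $\mathbb{D}:\mathcal{E}[w]\to\mathcal{T}[w-1]$: top $w(n+2w-2)u$, middle $(n+2w-2)\nabla u$, bottom $-(\Delta u+w\mathrm{J}u)$ (scale-independent). SCMS: positive $v\in\mathcal{E}[1]$, $m\in\mathbb{R}$, fixed constant $\mu$; in a scale $v$ is a positive function. $\Delta_\phi u=\Delta u+mv^{-1}g(\nabla v,\nabla u)$, $R^m_\phi=R-2mv^{-1}\Delta v-m(m-1)v^{-2}|\nabla v|^2$, $\mathrm{J}^W=\frac{1}{2(m+n-1)}(R^m_\phi+m\mu v^{-2})$. $J=\frac1n\mathbb{D}v$. The $W$-tractor-$D$ operator is defined in each scale by: $\mathbb{D}^Wu$ has top $w(m+n+2w-2)u$, middle $(m+n+2w-2)\nabla u$, bottom $-(\Delta_\phi u+w\mathrm{J}^Wu)$. *)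

theory Defs
  imports "HOL-Analysis.Analysis"
begin

text \<open>Local (coordinate) model of a conformal manifold: an open set U in R^n with a
Riemannian metric g given by its component matrix field g x (a scale in the conformal class).\<close>

type_synonym 'n pt = "real ^ 'n"
type_synonym 'n tractor = "real \<times> (real ^ 'n) \<times> real"
  \<comment> \<open>(top, middle (a tangent vector), bottom) in a scale\<close>

definition pd :: "'n::finite \<Rightarrow> ('n pt \<Rightarrow> real) \<Rightarrow> 'n pt \<Rightarrow> real" where
  "pd i f x = frechet_derivative f (at x) (axis i 1)"

fun pds :: "'n::finite list \<Rightarrow> ('n pt \<Rightarrow> real) \<Rightarrow> 'n pt \<Rightarrow> real" where
  "pds [] f = f"
| "pds (i # is) f = pd i (pds is f)"

definition smooth_on :: "'n::finite pt set \<Rightarrow> ('n pt \<Rightarrow> real) \<Rightarrow> bool" where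
  "smooth_on U f \<longleftrightarrow> (\<forall>is. \<forall>x\<in>U. pds is f differentiable (at x))"

definition riem_metric_on :: "'n::finite pt set \<Rightarrow> ('n pt \<Rightarrow> real ^ 'n ^ 'n) \<Rightarrow> bool" where
  "riem_metric_on U g \<longleftrightarrow>
     (\<forall>i j. smooth_on U (\<lambda>y. g y $ i $ j)) \<and>
     (\<forall>x\<in>U. transpose (g x) = g x \<and> (\<forall>\<xi>. \<xi> \<noteq> 0 \<longrightarrow> \<xi> \<bullet> (g x *v \<xi>) > 0))"

definition ginv :: "('n::finite pt \<Rightarrow> real ^ 'n ^ 'n) \<Rightarrow> 'n pt \<Rightarrow> real ^ 'n ^ 'n" where
  "ginv g x = matrix_inv (g x)"

definition gdot :: "('n::finite pt \<Rightarrow> real ^ 'n ^ 'n) \<Rightarrow> 'n pt \<Rightarrow> real ^ 'n \<Rightarrow> real ^ 'n \<Rightarrow> real" where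
  "gdot g x a b = a \<bullet> (g x *v b)"

definition christoffel :: "('n::finite pt \<Rightarrow> real ^ 'n ^ 'n) \<Rightarrow> 'n \<Rightarrow> 'n \<Rightarrow> 'n \<Rightarrow> 'n pt \<Rightarrow> real" where
  "christoffel g k i j x = (1/2) * (\<Sum>l\<in>UNIV. ginv g x $ k $ l *
      (pd i (\<lambda>y. g y $ j $ l) x + pd j (\<lambda>y. g y $ i $ l) x - pd l (\<lambda>y. g y $ i $ j) x))"

definition ricci :: "('n::finite pt \<Rightarrow> real ^ 'n ^ 'n) \<Rightarrow> 'n \<Rightarrow> 'n \<Rightarrow> 'n pt \<Rightarrow> real" where
  "ricci g i j x = (\<Sum>k\<in>UNIV. pd k (christoffel g k i j) x - pd j (christoffel g k i k) x
      + (\<Sum>l\<in>UNIV. christoffel g k k l x * christoffel g l i j x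
                  - christoffel g k j l x * christoffel g l i k x))"

definition scal :: "('n::finite pt \<Rightarrow> real ^ 'n ^ 'n) \<Rightarrow> 'n pt \<Rightarrow> real" where
  "scal g x = (\<Sum>i\<in>UNIV. \<Sum>j\<in>UNIV. ginv g x $ i $ j * ricci g i j x)"

text \<open>J = tr P for the Schouten tensor P = (Ric - J g)/(n-2); solving gives J = R/(2(n-1)).\<close>
definition schJ :: "('n::finite pt \<Rightarrow> real ^ 'n ^ 'n) \<Rightarrow> 'n pt \<Rightarrow> real" where
  "schJ g x = scal g x / (2 * (real CARD('n) - 1))"

definition grad :: "('n::finite pt \<Rightarrow> real ^ 'n ^ 'n) \<Rightarrow> ('n pt \<Rightarrow> real) \<Rightarrow> 'n pt \<Rightarrow> real ^ 'n" where
  "grad g u x = ginv g x *v (\<chi> i. pd i u x)"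

definition lap :: "('n::finite pt \<Rightarrow> real ^ 'n ^ 'n) \<Rightarrow> ('n pt \<Rightarrow> real) \<Rightarrow> 'n pt \<Rightarrow> real" where
  "lap g u x = (\<Sum>i\<in>UNIV. \<Sum>j\<in>UNIV. ginv g x $ i $ j *
      (pd i (pd j u) x - (\<Sum>k\<in>UNIV. christoffel g k i j x * pd k u x)))"

definition tmetric :: "('n::finite pt \<Rightarrow> real ^ 'n ^ 'n) \<Rightarrow> 'n pt \<Rightarrow> 'n tractor \<Rightarrow> 'n tractor \<Rightarrow> real" where
  "tmetric g x I I' = (case I of (s, om, r) \<Rightarrow> case I' of (s', om', r') \<Rightarrow>
      s * r' + r * s' + gdot g x om om')"

definition tX :: "'n::finite tractor" where
  "tX = (0, 0, 1)"

text \<open>Tractor-D operator E[w] -> T[w-1], in the scale g.\<close>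
definition tD :: "('n::finite pt \<Rightarrow> real ^ 'n ^ 'n) \<Rightarrow> real \<Rightarrow> ('n pt \<Rightarrow> real) \<Rightarrow> 'n pt \<Rightarrow> 'n tractor" where
  "tD g w u x = (let n = real CARD('n) in
     (w * (n + 2*w - 2) * u x, (n + 2*w - 2) *\<^sub>R grad g u x, - (lap g u x + w * schJ g x * u x)))"

text \<open>SMMS quantities (parameters m, mu, and the density v, represented by a positive function in the scale).\<close>
definition wlap :: "('n::finite pt \<Rightarrow> real ^ 'n ^ 'n) \<Rightarrow> real \<Rightarrow> ('n pt \<Rightarrow> real) \<Rightarrow> ('n pt \<Rightarrow> real) \<Rightarrow> 'n pt \<Rightarrow> real" where
  "wlap g m v u x = lap g u x + m / v x * gdot g x (grad g v x) (grad g u x)"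

definition Rmphi :: "('n::finite pt \<Rightarrow> real ^ 'n ^ 'n) \<Rightarrow> real \<Rightarrow> ('n pt \<Rightarrow> real) \<Rightarrow> 'n pt \<Rightarrow> real" where
  "Rmphi g m v x = scal g x - 2 * m / v x * lap g v x
     - m * (m - 1) / (v x)\<^sup>2 * gdot g x (grad g v x) (grad g v x)"

definition JW :: "('n::finite pt \<Rightarrow> real ^ 'n ^ 'n) \<Rightarrow> real \<Rightarrow> real \<Rightarrow> ('n pt \<Rightarrow> real) \<Rightarrow> 'n pt \<Rightarrow> real" where
  "JW g m mu v x = (Rmphi g m v x + m * mu / (v x)\<^sup>2) / (2 * (m + real CARD('n) - 1))"

definition tDW :: "('n::finite pt \<Rightarrow> real ^ 'n ^ 'n) \<Rightarrow> real \<Rightarrow> real \<Rightarrow> ('n pt \<Rightarrow> real) \<Rightarrow> real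
                    \<Rightarrow> ('n pt \<Rightarrow> real) \<Rightarrow> 'n pt \<Rightarrow> 'n tractor" where
  "tDW g m mu v w u x = (let n = real CARD('n) in
     (w * (m + n + 2*w - 2) * u x, (m + n + 2*w - 2) *\<^sub>R grad g u x,
      - (wlap g m v u x + w * JW g m mu v x * u x)))"

definition tJ :: "('n::finite pt \<Rightarrow> real ^ 'n ^ 'n) \<Rightarrow> ('n pt \<Rightarrow> real) \<Rightarrow> 'n pt \<Rightarrow> 'n tractor" where
  "tJ g v x = (1 / real CARD('n)) *\<^sub>R tD g 1 v x"

text \<open>Change of scale g \<mapsto> e^(2s) g for a weight-k tractor, expressed in the old scale g.\<close>
definition tractor_rescale :: "('n::finite pt \<Rightarrow> real ^ 'n ^ 'n) \<Rightarrow> real \<Rightarrow> ('n pt \<Rightarrow> real) \<Rightarrow> 'n pt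
                               \<Rightarrow> 'n tractor \<Rightarrow> 'n tractor" where
  "tractor_rescale g k s x I = (case I of (sg, om, r) \<Rightarrow>
     exp (k * s x) *\<^sub>R
     (exp (s x) * sg,
      exp (- s x) *\<^sub>R (om + sg *\<^sub>R grad g s x),
      exp (- s x) * (r - gdot g x (grad g s x) om - (1/2) * gdot g x (grad g s x) (grad g s x) * sg)))"

end

theory Submission
  imports Defs
begin

section \<open>Partial derivative calculus\<close>

lemma pd_hd: "(f has_derivative f') (at x) \<Longrightarrow> pd i f x = f' (axis i 1)"
  unfolding pd_def by (metis frechet_derivative_at)

lemma fdw: "f differentiable (at x) \<Longrightarrow> (f has_derivative frechet_derivative f (at x)) (at x)"
  by (rule frechet_derivative_works[THEN iffD1])

lemma pd_add:
  assumes "f differentiable (at x)" "g differentiable (at x)"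
  shows "pd i (\<lambda>y. f y + g y) x = pd i f x + pd i g x"
  using pd_hd[OF has_derivative_add[OF fdw[OF assms(1)] fdw[OF assms(2)]]] by (simp add: pd_def)

lemma pd_diff:
  assumes "f differentiable (at x)" "g differentiable (at x)"
  shows "pd i (\<lambda>y. f y - g y) x = pd i f x - pd i g x"
  using pd_hd[OF has_derivative_diff[OF fdw[OF assms(1)] fdw[OF assms(2)]]] by (simp add: pd_def)

lemma pd_mult:
  assumes "f differentiable (at x)" "g differentiable (at x)"
  shows "pd i (\<lambda>y. f y * g y) x = f x * pd i g x + pd i f x * g x"
  using pd_hd[OF has_derivative_mult[OF fdw[OF assms(1)] fdw[OF assms(2)]]] by (simp add: pd_def)

lemma pd_const: "pd i (\<lambda>y. c) x = 0"
  using pd_hd[of "\<lambda>y. c" "\<lambda>h. 0"] by simp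

lemma pd_cmult:
  assumes "f differentiable (at x)"
  shows "pd i (\<lambda>y. c * f y) x = c * pd i f x"
  using pd_mult[of "\<lambda>y. c" x f i] assms by (simp add: pd_const)

lemma pd_minus:
  assumes "f differentiable (at x)"
  shows "pd i (\<lambda>y. - f y) x = - pd i f x"
  using pd_cmult[OF assms, of i "-1"] by simp

lemma pd_sum:
  assumes "finite A" "\<And>a. a \<in> A \<Longrightarrow> f a differentiable (at x)"
  shows "pd i (\<lambda>y. \<Sum>a\<in>A. f a y) x = (\<Sum>a\<in>A. pd i (f a) x)"
proof -
  have "((\<lambda>y. \<Sum>a\<in>A. f a y) has_derivative (\<lambda>h. \<Sum>a\<in>A. frechet_derivative (f a) (at x) h)) (at x)"
    by (rule has_derivative_sum) (use assms fdw in auto)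
  from pd_hd[OF this] show ?thesis by (simp add: pd_def)
qed

lemma pd_exp:
  assumes "f differentiable (at x)"
  shows "pd i (\<lambda>y. exp (f y)) x = exp (f x) * pd i f x"
proof -
  have "((\<lambda>y. exp (f y)) has_derivative (\<lambda>h. exp (f x) * frechet_derivative f (at x) h)) (at x)"
    using has_derivative_compose[OF fdw[OF assms] DERIV_exp[THEN has_field_derivative_imp_has_derivative]]
    by (simp add: o_def mult.commute)
  from pd_hd[OF this] show ?thesis by (simp add: pd_def)
qed

lemma diff_exp: "(f :: 'a::real_normed_vector \<Rightarrow> real) differentiable (at x) \<Longrightarrow> (\<lambda>y. exp (f y)) differentiable (at x)"
proof -
  assume a: "f differentiable (at x)"
  have "exp differentiable (at (f x))"
    using DERIV_exp[of "f x", THEN has_field_derivative_imp_has_derivative] unfolding differentiable_def by blast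
  then show ?thesis using differentiable_compose[of exp f x] a by auto
qed

lemma pd_local:
  assumes "open S" "x \<in> S" "\<And>y. y \<in> S \<Longrightarrow> f y = g y" "f differentiable (at x)"
  shows "pd i f x = pd i g x"
proof -
  have "(g has_derivative frechet_derivative f (at x)) (at x)"
    by (rule has_derivative_transform_within_open[OF fdw[OF assms(4)] assms(1,2)]) (use assms(3) in auto)
  from pd_hd[OF this] show ?thesis by (simp add: pd_def)
qed

lemma diff_local:
  assumes "open S" "x \<in> S" "\<And>y. y \<in> S \<Longrightarrow> f y = g y" "f differentiable (at x)"
  shows "g differentiable (at x)"
proof -
  have "(g has_derivative frechet_derivative f (at x)) (at x)"
    by (rule has_derivative_transform_within_open[OF fdw[OF assms(4)] assms(1,2)]) (use assms(3) in auto)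
  then show ?thesis by (auto simp: differentiable_def)
qed


lemma differentiable_prod':
  fixes f :: "'i \<Rightarrow> 'a::real_normed_vector \<Rightarrow> real"
  assumes "finite A" "\<forall>a\<in>A. f a differentiable (at x)"
  shows "(\<lambda>y. \<Prod>a\<in>A. f a y) differentiable (at x)"
  using assms by (induction A rule: finite_induct) (auto intro!: differentiable_mult)

lemma det_differentiable:
  fixes M :: "'a::real_normed_vector \<Rightarrow> real^'n::finite^'n"
  assumes "\<And>i j. (\<lambda>y. M y $ i $ j) differentiable (at x)"
  shows "(\<lambda>y. det (M y)) differentiable (at x)"
  unfolding det_def
  by (intro differentiable_sum ballI differentiable_mult differentiable_const differentiable_prod' finite_permutations finite_UNIV)
     (auto simp: assms)

lemma sw4: "(\<Sum>i\<in>(UNIV::'a::finite set). \<Sum>j\<in>(UNIV::'b::finite set). \<Sum>k\<in>(UNIV::'c::finite set). \<Sum>l\<in>(UNIV::'d::finite set). F i j k l)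
          = (\<Sum>k\<in>UNIV. \<Sum>l\<in>UNIV. \<Sum>i\<in>UNIV. \<Sum>j\<in>UNIV. F i j k l)"
proof -
  have "(\<Sum>i\<in>(UNIV::'a set). \<Sum>j\<in>(UNIV::'b set). \<Sum>k\<in>(UNIV::'c set). \<Sum>l\<in>(UNIV::'d set). F i j k l)
     = (\<Sum>i\<in>UNIV. \<Sum>k\<in>UNIV. \<Sum>j\<in>UNIV. \<Sum>l\<in>UNIV. F i j k l)"
    by (rule sum.cong[OF refl], rule sum.swap)
  also have "\<dots> = (\<Sum>k\<in>UNIV. \<Sum>i\<in>UNIV. \<Sum>j\<in>UNIV. \<Sum>l\<in>UNIV. F i j k l)" by (rule sum.swap)
  also have "\<dots> = (\<Sum>k\<in>UNIV. \<Sum>i\<in>UNIV. \<Sum>l\<in>UNIV. \<Sum>j\<in>UNIV. F i j k l)"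
    by (rule sum.cong[OF refl], rule sum.cong[OF refl], rule sum.swap)
  also have "\<dots> = (\<Sum>k\<in>UNIV. \<Sum>l\<in>UNIV. \<Sum>i\<in>UNIV. \<Sum>j\<in>UNIV. F i j k l)"
    by (rule sum.cong[OF refl], rule sum.swap)
  finally show ?thesis .
qed

lemma sw3: "(\<Sum>i\<in>(UNIV::'a::finite set). \<Sum>j\<in>(UNIV::'b::finite set). \<Sum>k\<in>(UNIV::'c::finite set). F i j k)
          = (\<Sum>k\<in>UNIV. \<Sum>i\<in>UNIV. \<Sum>j\<in>UNIV. F i j k)"
proof -
  have "(\<Sum>i\<in>(UNIV::'a set). \<Sum>j\<in>(UNIV::'b set). \<Sum>k\<in>(UNIV::'c set). F i j k)
     = (\<Sum>i\<in>UNIV. \<Sum>k\<in>UNIV. \<Sum>j\<in>UNIV. F i j k)"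
    by (rule sum.cong[OF refl], rule sum.swap)
  also have "\<dots> = (\<Sum>k\<in>UNIV. \<Sum>i\<in>UNIV. \<Sum>j\<in>UNIV. F i j k)" by (rule sum.swap)
  finally show ?thesis .
qed

lemma sw4b: "(\<Sum>i\<in>(UNIV::'a::finite set). \<Sum>j\<in>(UNIV::'b::finite set). \<Sum>k\<in>(UNIV::'c::finite set). \<Sum>l\<in>(UNIV::'d::finite set). F i j k l)
          = (\<Sum>j\<in>UNIV. \<Sum>k\<in>UNIV. \<Sum>l\<in>UNIV. \<Sum>i\<in>UNIV. F i j k l)"
proof -
  have "(\<Sum>i\<in>(UNIV::'a set). \<Sum>j\<in>(UNIV::'b set). \<Sum>k\<in>(UNIV::'c set). \<Sum>l\<in>(UNIV::'d set). F i j k l)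
     = (\<Sum>j\<in>UNIV. \<Sum>i\<in>UNIV. \<Sum>k\<in>UNIV. \<Sum>l\<in>UNIV. F i j k l)" by (rule sum.swap)
  also have "\<dots> = (\<Sum>j\<in>UNIV. \<Sum>k\<in>UNIV. \<Sum>i\<in>UNIV. \<Sum>l\<in>UNIV. F i j k l)"
    by (rule sum.cong[OF refl], rule sum.swap)
  also have "\<dots> = (\<Sum>j\<in>UNIV. \<Sum>k\<in>UNIV. \<Sum>l\<in>UNIV. \<Sum>i\<in>UNIV. F i j k l)"
    by (rule sum.cong[OF refl], rule sum.cong[OF refl], rule sum.swap)
  finally show ?thesis .
qed

lemma sw3b: "(\<Sum>i\<in>(UNIV::'a::finite set). \<Sum>j\<in>(UNIV::'b::finite set). \<Sum>k\<in>(UNIV::'c::finite set). F i j k)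
          = (\<Sum>j\<in>UNIV. \<Sum>k\<in>UNIV. \<Sum>i\<in>UNIV. F i j k)"
proof -
  have "(\<Sum>i\<in>(UNIV::'a set). \<Sum>j\<in>(UNIV::'b set). \<Sum>k\<in>(UNIV::'c set). F i j k)
     = (\<Sum>j\<in>UNIV. \<Sum>i\<in>UNIV. \<Sum>k\<in>UNIV. F i j k)" by (rule sum.swap)
  also have "\<dots> = (\<Sum>j\<in>UNIV. \<Sum>k\<in>UNIV. \<Sum>i\<in>UNIV. F i j k)"
    by (rule sum.cong[OF refl], rule sum.swap)
  finally show ?thesis .
qed

lemma ifm1 [simp]: "(if c then a else 0) * b = (if c then a * b else (0::real))" by simp
lemma ifm2 [simp]: "b * (if c then a else 0) = (if c then b * a else (0::real))" by simp
lemma sum_ifc [simp]: "(\<Sum>j\<in>A. if c then f j else (0::real)) = (if c then (\<Sum>j\<in>A. f j) else 0)" by simp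

locale alg =
  fixes B G :: "'n::finite \<Rightarrow> 'n \<Rightarrow> real" and sv :: "'n \<Rightarrow> real"
  assumes Bs: "\<And>i j. B i j = B j i" and Gs: "\<And>i j. G i j = G j i"
    and BG: "\<And>k j. (\<Sum>l\<in>UNIV. B k l * G l j) = (if k = j then 1 else 0)"
begin

definition h where "h k = (\<Sum>l\<in>UNIV. B k l * sv l)"
definition C where "C k i j = (if k = i then sv j else 0) + (if k = j then sv i else 0) - G i j * h k"

lemma GB: "(\<Sum>l\<in>UNIV. G k l * B l j) = (if k = j then 1 else 0)"
  using BG[of j k] by (auto simp: Bs Gs mult.commute)

lemma trace: "(\<Sum>i\<in>UNIV. \<Sum>j\<in>UNIV. B i j * G i j) = real CARD('n)"
  using BG by (simp add: Gs)

lemma Gh: "(\<Sum>k\<in>UNIV. G i k * h k) = sv i"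
proof -
  have "(\<Sum>k\<in>UNIV. G i k * h k) = (\<Sum>k\<in>UNIV. \<Sum>l\<in>UNIV. G i k * B k l * sv l)"
    by (simp add: h_def sum_distrib_left mult.assoc)
  also have "\<dots> = (\<Sum>l\<in>UNIV. (\<Sum>k\<in>UNIV. G i k * B k l) * sv l)"
    by (subst sum.swap) (simp add: sum_distrib_right)
  also have "\<dots> = sv i" by (simp add: GB)
  finally show ?thesis .
qed

lemma BC: "(\<Sum>i\<in>UNIV. \<Sum>j\<in>UNIV. B i j * C l i j) = (2 - real CARD('n)) * h l"
proof -
  have "(\<Sum>i\<in>UNIV. \<Sum>j\<in>UNIV. B i j * C l i j) = (\<Sum>i\<in>UNIV. \<Sum>j\<in>UNIV. (if l = i then B i j * sv j else 0)
         + (if l = j then B i j * sv i else 0) - (B i j * G i j) * h l)"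
    by (rule sum.cong[OF refl], rule sum.cong[OF refl]) (simp add: C_def algebra_simps)
  also have "\<dots> = h l + (\<Sum>i\<in>UNIV. B i l * sv i) - real CARD('n) * h l"
    by (simp add: sum.distrib sum_subtractf sum_distrib_right[symmetric] trace h_def)
  also have "(\<Sum>i\<in>UNIV. B i l * sv i) = h l" by (simp add: h_def Bs)
  finally show ?thesis by (simp add: algebra_simps)
qed

lemma Ckk: "(\<Sum>k\<in>UNIV. C k k l) = real CARD('n) * sv l"
proof -
  have "(\<Sum>k\<in>UNIV. C k k l) = (\<Sum>k\<in>UNIV. sv l + (if k = l then sv k else 0) - G k l * h k)"
    by (rule sum.cong) (auto simp: C_def)
  also have "\<dots> = real CARD('n) * sv l + sv l - sv l"
    using Gh[of l] by (simp add: sum.distrib sum_subtractf Gs)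
  finally show ?thesis by simp
qed

lemma Ckk': "(\<Sum>k\<in>UNIV. C k l k) = real CARD('n) * sv l"
proof -
  have "C k l k = C k k l" for k by (simp add: C_def Gs)
  then show ?thesis using Ckk by simp
qed


definition Gl :: "('n \<Rightarrow> 'n \<Rightarrow> 'n \<Rightarrow> real) \<Rightarrow> 'n \<Rightarrow> real" where "Gl Gm l = (\<Sum>k\<in>UNIV. Gm k k l)"
definition gam :: "('n \<Rightarrow> 'n \<Rightarrow> 'n \<Rightarrow> real) \<Rightarrow> 'n \<Rightarrow> real" where "gam Gm l = (\<Sum>i\<in>UNIV. \<Sum>j\<in>UNIV. B i j * Gm l i j)"

lemma T1:
  fixes Gm :: "'n \<Rightarrow> 'n \<Rightarrow> 'n \<Rightarrow> real"
  shows "(\<Sum>i\<in>UNIV. \<Sum>j\<in>UNIV. B i j * (\<Sum>k\<in>UNIV. \<Sum>l\<in>UNIV. Gm k k l * C l i j))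
     = (2 - real CARD('n)) * (\<Sum>l\<in>UNIV. Gl Gm l * h l)"
proof -
  have "(\<Sum>i\<in>UNIV. \<Sum>j\<in>UNIV. B i j * (\<Sum>k\<in>UNIV. \<Sum>l\<in>UNIV. Gm k k l * C l i j))
     = (\<Sum>k\<in>UNIV. \<Sum>l\<in>UNIV. Gm k k l * (\<Sum>i\<in>UNIV. \<Sum>j\<in>UNIV. B i j * C l i j))"
    unfolding sum_distrib_left by (rule trans[OF sw4]) (simp add: mult_ac)
  also have "\<dots> = (2 - real CARD('n)) * (\<Sum>l\<in>UNIV. Gl Gm l * h l)"
    unfolding BC Gl_def by (subst sum.swap) (simp add: sum_distrib_left sum_distrib_right mult_ac)
  finally show ?thesis .
qed

lemma T2:
  fixes Gm :: "'n \<Rightarrow> 'n \<Rightarrow> 'n \<Rightarrow> real"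
  shows "(\<Sum>i\<in>UNIV. \<Sum>j\<in>UNIV. B i j * (\<Sum>k\<in>UNIV. \<Sum>l\<in>UNIV. C k k l * Gm l i j))
     = real CARD('n) * (\<Sum>l\<in>UNIV. sv l * gam Gm l)"
proof -
  have "(\<Sum>i\<in>UNIV. \<Sum>j\<in>UNIV. B i j * (\<Sum>k\<in>UNIV. \<Sum>l\<in>UNIV. C k k l * Gm l i j))
     = (\<Sum>k\<in>UNIV. \<Sum>l\<in>UNIV. C k k l * (\<Sum>i\<in>UNIV. \<Sum>j\<in>UNIV. B i j * Gm l i j))"
    unfolding sum_distrib_left by (rule trans[OF sw4]) (simp add: mult_ac)
  also have "\<dots> = (\<Sum>l\<in>UNIV. (\<Sum>k\<in>UNIV. C k k l) * gam Gm l)"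
    unfolding gam_def by (subst sum.swap) (simp add: sum_distrib_right)
  also have "\<dots> = real CARD('n) * (\<Sum>l\<in>UNIV. sv l * gam Gm l)"
    unfolding Ckk by (simp add: sum_distrib_left mult_ac)
  finally show ?thesis .
qed

lemma T3:
  fixes Gm :: "'n \<Rightarrow> 'n \<Rightarrow> 'n \<Rightarrow> real"
  shows "(\<Sum>i\<in>UNIV. \<Sum>j\<in>UNIV. B i j * (\<Sum>k\<in>UNIV. \<Sum>l\<in>UNIV. C k k l * C l i j))
     = real CARD('n) * (2 - real CARD('n)) * (\<Sum>l\<in>UNIV. sv l * h l)"
proof -
  have "(\<Sum>i\<in>UNIV. \<Sum>j\<in>UNIV. B i j * (\<Sum>k\<in>UNIV. \<Sum>l\<in>UNIV. C k k l * C l i j))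
     = (\<Sum>k\<in>UNIV. \<Sum>l\<in>UNIV. C k k l * (\<Sum>i\<in>UNIV. \<Sum>j\<in>UNIV. B i j * C l i j))"
    unfolding sum_distrib_left by (rule trans[OF sw4]) (simp add: mult_ac)
  also have "\<dots> = (\<Sum>l\<in>UNIV. (\<Sum>k\<in>UNIV. C k k l) * ((2 - real CARD('n)) * h l))"
    unfolding BC by (subst sum.swap) (simp add: sum_distrib_right)
  also have "\<dots> = real CARD('n) * (2 - real CARD('n)) * (\<Sum>l\<in>UNIV. sv l * h l)"
    unfolding Ckk by (simp add: sum_distrib_left mult_ac)
  finally show ?thesis .
qed


lemma Gh': "(\<Sum>k\<in>UNIV. h k * G i k) = sv i"
  using Gh by (simp add: mult.commute)

lemma M: "(\<Sum>k\<in>UNIV. \<Sum>l\<in>UNIV. C k j l * C l i k) = (real CARD('n) + 2) * sv i * sv j - 2 * G i j * (\<Sum>l\<in>UNIV. sv l * h l)"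
proof -
  have hh: "(\<Sum>k\<in>UNIV. \<Sum>l\<in>UNIV. G j l * h k * (G i k * h l)) = sv i * sv j"
  proof -
    have "(\<Sum>k\<in>UNIV. \<Sum>l\<in>UNIV. G j l * h k * (G i k * h l)) = (\<Sum>k\<in>UNIV. G i k * h k * (\<Sum>l\<in>UNIV. G j l * h l))"
      by (simp add: sum_distrib_left mult_ac)
    also have "\<dots> = sv i * sv j" by (simp add: sum_distrib_right[symmetric] Gh)
    finally show ?thesis .
  qed
  have "(\<Sum>k\<in>UNIV. \<Sum>l\<in>UNIV. C k j l * C l i k) = (\<Sum>k\<in>UNIV. \<Sum>l\<in>UNIV.
      (if k = j then (if l = i then sv l * sv k else 0) else 0) + (if k = j then (if l = k then sv l * sv i else 0) else 0) - (if k = j then sv l * (G i k * h l) else 0)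
    + (if l = i then (if k = l then sv j * sv k else 0) else 0) + (if k = l then sv j * sv i else 0) - (if k = l then sv j * (G i k * h l) else 0)
    - (if l = i then G j l * h k * sv k else 0) - (if l = k then G j l * h k * sv i else 0) + G j l * h k * (G i k * h l))"
    by (rule sum.cong[OF refl], rule sum.cong[OF refl]) (auto simp: C_def algebra_simps)
  also have "\<dots> = sv i * sv j + sv j * sv i - G i j * (\<Sum>l\<in>UNIV. sv l * h l)
      + sv j * sv i + real CARD('n) * (sv j * sv i) - sv j * (\<Sum>k\<in>UNIV. G i k * h k)
      - G j i * (\<Sum>k\<in>UNIV. h k * sv k) - (\<Sum>k\<in>UNIV. G j k * h k) * sv i + sv i * sv j"
    apply (simp only: sum.distrib sum_subtractf hh)
    by (simp add: sum_distrib_left sum_distrib_right mult_ac)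
  also have "\<dots> = (real CARD('n) + 2) * sv i * sv j - 2 * G i j * (\<Sum>l\<in>UNIV. sv l * h l)"
    by (simp add: Gh Gs[of j i] mult.commute[of "h _"] algebra_simps)
  finally show ?thesis .
qed


lemma T6: "(\<Sum>i\<in>UNIV. \<Sum>j\<in>UNIV. B i j * (\<Sum>k\<in>UNIV. \<Sum>l\<in>UNIV. C k j l * C l i k))
     = (2 - real CARD('n)) * (\<Sum>l\<in>UNIV. sv l * h l)"
proof -
  define S where "S = (\<Sum>l\<in>UNIV. sv l * h l)"
  have "(\<Sum>i\<in>UNIV. \<Sum>j\<in>UNIV. B i j * (\<Sum>k\<in>UNIV. \<Sum>l\<in>UNIV. C k j l * C l i k))
     = (\<Sum>i\<in>UNIV. \<Sum>j\<in>UNIV. (real CARD('n) + 2) * (sv i * (B i j * sv j)) - 2 * S * (B i j * G i j))"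
    unfolding M S_def[symmetric] by (rule sum.cong[OF refl], rule sum.cong[OF refl]) (simp add: algebra_simps)
  also have "\<dots> = (real CARD('n) + 2) * S - 2 * S * real CARD('n)"
    by (simp add: sum_subtractf sum_distrib_left[symmetric] trace h_def S_def)
  finally show ?thesis unfolding S_def by (simp add: algebra_simps)
qed

lemma T4:
  fixes Gm :: "'n \<Rightarrow> 'n \<Rightarrow> 'n \<Rightarrow> real"
  assumes Gms: "\<And>k i j. Gm k i j = Gm k j i"
  shows "(\<Sum>i\<in>UNIV. \<Sum>j\<in>UNIV. B i j * (\<Sum>k\<in>UNIV. \<Sum>l\<in>UNIV. Gm k j l * C l i k))
     = (\<Sum>l\<in>UNIV. sv l * gam Gm l)"
proof -
  have pw: "B i j * (\<Sum>k\<in>UNIV. \<Sum>l\<in>UNIV. Gm k j l * C l i k)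
     = (\<Sum>k\<in>UNIV. B i j * Gm k j i * sv k) + (\<Sum>k\<in>UNIV. B i j * Gm k j k * sv i)
       - (\<Sum>k\<in>UNIV. \<Sum>l\<in>UNIV. B i j * G i k * Gm k j l * h l)" for i j
  proof -
    have "B i j * (\<Sum>k\<in>UNIV. \<Sum>l\<in>UNIV. Gm k j l * C l i k) = (\<Sum>k\<in>UNIV. \<Sum>l\<in>UNIV.
       (if l = i then B i j * Gm k j l * sv k else 0) + (if l = k then B i j * Gm k j l * sv i else 0) - B i j * G i k * Gm k j l * h l)"
      unfolding sum_distrib_left
      by (rule sum.cong[OF refl], rule sum.cong[OF refl]) (auto simp: C_def algebra_simps)
    then show ?thesis by (simp add: sum.distrib sum_subtractf)
  qed
  have A: "(\<Sum>i\<in>UNIV. \<Sum>j\<in>UNIV. \<Sum>k\<in>UNIV. B i j * Gm k j i * sv k) = (\<Sum>l\<in>UNIV. sv l * gam Gm l)"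
    apply (rule trans[OF sw3])
    unfolding gam_def sum_distrib_left
    apply (rule sum.cong[OF refl], rule sum.cong[OF refl], rule sum.cong[OF refl])
    by (subst Gms, simp add: mult_ac)
  have Bt: "(\<Sum>i\<in>UNIV. \<Sum>j\<in>UNIV. \<Sum>k\<in>UNIV. B i j * Gm k j k * sv i) = (\<Sum>j\<in>UNIV. h j * Gl Gm j)"
  proof -
    have "(\<Sum>i\<in>UNIV. \<Sum>j\<in>UNIV. \<Sum>k\<in>UNIV. B i j * Gm k j k * sv i) = (\<Sum>j\<in>UNIV. \<Sum>i\<in>UNIV. \<Sum>k\<in>UNIV. B j i * sv i * Gm k k j)"
      apply (rule trans[OF sum.swap])
      apply (rule sum.cong[OF refl], rule sum.cong[OF refl], rule sum.cong[OF refl])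
      by (subst Bs, subst Gms, simp add: mult_ac)
    also have "\<dots> = (\<Sum>j\<in>UNIV. h j * Gl Gm j)"
      unfolding h_def Gl_def sum_product by (simp add: mult_ac)
    finally show ?thesis .
  qed
  have Ct: "(\<Sum>i\<in>UNIV. \<Sum>j\<in>UNIV. \<Sum>k\<in>UNIV. \<Sum>l\<in>UNIV. B i j * G i k * Gm k j l * h l) = (\<Sum>j\<in>UNIV. h j * Gl Gm j)"
  proof -
    have "(\<Sum>i\<in>UNIV. \<Sum>j\<in>UNIV. \<Sum>k\<in>UNIV. \<Sum>l\<in>UNIV. B i j * G i k * Gm k j l * h l)
        = (\<Sum>j\<in>UNIV. \<Sum>k\<in>UNIV. \<Sum>l\<in>UNIV. (\<Sum>i\<in>UNIV. B j i * G i k) * Gm k j l * h l)"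
      apply (rule trans[OF sw4b])
      apply (simp add: sum_distrib_right)
      apply (rule sum.cong[OF refl], rule sum.cong[OF refl], rule sum.cong[OF refl], rule sum.cong[OF refl])
      by (subst Bs, simp)
    also have "\<dots> = (\<Sum>j\<in>UNIV. \<Sum>l\<in>UNIV. Gm j j l * h l)" by (simp add: BG)
    also have "\<dots> = (\<Sum>j\<in>UNIV. h j * Gl Gm j)"
      unfolding Gl_def by (subst sum.swap) (simp add: sum_distrib_left sum_distrib_right mult_ac)
    finally show ?thesis .
  qed
  show ?thesis unfolding pw by (simp add: sum.distrib sum_subtractf A Bt Ct)
qed

lemma T5:
  fixes Gm :: "'n \<Rightarrow> 'n \<Rightarrow> 'n \<Rightarrow> real"
  assumes Gms: "\<And>k i j. Gm k i j = Gm k j i"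
  shows "(\<Sum>i\<in>UNIV. \<Sum>j\<in>UNIV. B i j * (\<Sum>k\<in>UNIV. \<Sum>l\<in>UNIV. C k j l * Gm l i k))
     = (\<Sum>l\<in>UNIV. sv l * gam Gm l)"
proof -
  have pw: "B i j * (\<Sum>k\<in>UNIV. \<Sum>l\<in>UNIV. C k j l * Gm l i k)
     = (\<Sum>l\<in>UNIV. B i j * sv l * Gm l i j) + (\<Sum>k\<in>UNIV. B i j * sv j * Gm k i k)
       - (\<Sum>k\<in>UNIV. \<Sum>l\<in>UNIV. B i j * G j l * h k * Gm l i k)" for i j
  proof -
    have "B i j * (\<Sum>k\<in>UNIV. \<Sum>l\<in>UNIV. C k j l * Gm l i k) = (\<Sum>k\<in>UNIV. \<Sum>l\<in>UNIV.
       (if k = j then B i j * sv l * Gm l i k else 0) + (if l = k then B i j * sv j * Gm l i k else 0) - B i j * G j l * h k * Gm l i k)"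
      unfolding sum_distrib_left
      by (rule sum.cong[OF refl], rule sum.cong[OF refl]) (auto simp: C_def algebra_simps)
    then show ?thesis by (simp add: sum.distrib sum_subtractf)
  qed
  have A: "(\<Sum>i\<in>UNIV. \<Sum>j\<in>UNIV. \<Sum>l\<in>UNIV. B i j * sv l * Gm l i j) = (\<Sum>l\<in>UNIV. sv l * gam Gm l)"
    by (rule trans[OF sw3]) (simp add: gam_def sum_distrib_left mult_ac)
  have Bt: "(\<Sum>i\<in>UNIV. \<Sum>j\<in>UNIV. \<Sum>k\<in>UNIV. B i j * sv j * Gm k i k) = (\<Sum>j\<in>UNIV. h j * Gl Gm j)"
    unfolding h_def Gl_def sum_product
    apply (rule sum.cong[OF refl], rule sum.cong[OF refl], rule sum.cong[OF refl])
    by (subst Gms, simp add: mult_ac)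
  have Ct: "(\<Sum>i\<in>UNIV. \<Sum>j\<in>UNIV. \<Sum>k\<in>UNIV. \<Sum>l\<in>UNIV. B i j * G j l * h k * Gm l i k) = (\<Sum>j\<in>UNIV. h j * Gl Gm j)"
  proof -
    have "(\<Sum>i\<in>UNIV. \<Sum>j\<in>UNIV. \<Sum>k\<in>UNIV. \<Sum>l\<in>UNIV. B i j * G j l * h k * Gm l i k)
        = (\<Sum>i\<in>UNIV. \<Sum>k\<in>UNIV. \<Sum>l\<in>UNIV. (\<Sum>j\<in>UNIV. B i j * G j l) * h k * Gm l i k)"
      by (rule sum.cong[OF refl], subst sw3b) (simp add: sum_distrib_right)
    also have "\<dots> = (\<Sum>i\<in>UNIV. \<Sum>k\<in>UNIV. h k * Gm i i k)" by (simp add: BG)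
    also have "\<dots> = (\<Sum>j\<in>UNIV. h j * Gl Gm j)"
      unfolding Gl_def by (subst sum.swap) (simp add: sum_distrib_left sum_distrib_right mult_ac)
    finally show ?thesis .
  qed
  show ?thesis unfolding pw by (simp add: sum.distrib sum_subtractf A Bt Ct)
qed


lemma Qcontr:
  fixes Gm :: "'n \<Rightarrow> 'n \<Rightarrow> 'n \<Rightarrow> real"
  assumes Gms: "\<And>k i j. Gm k i j = Gm k j i"
  shows "(\<Sum>i\<in>UNIV. \<Sum>j\<in>UNIV. B i j * (\<Sum>k\<in>UNIV. \<Sum>l\<in>UNIV.
            (Gm k k l + C k k l) * (Gm l i j + C l i j) - (Gm k j l + C k j l) * (Gm l i k + C l i k)))
       = (\<Sum>i\<in>UNIV. \<Sum>j\<in>UNIV. B i j * (\<Sum>k\<in>UNIV. \<Sum>l\<in>UNIV. Gm k k l * Gm l i j - Gm k j l * Gm l i k))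
         + (2 - real CARD('n)) * (\<Sum>l\<in>UNIV. Gl Gm l * h l)
         + (real CARD('n) - 2) * (\<Sum>l\<in>UNIV. sv l * gam Gm l)
         - (real CARD('n) - 1) * (real CARD('n) - 2) * (\<Sum>l\<in>UNIV. sv l * h l)"
proof -
  have pw: "(Gm k k l + C k k l) * (Gm l i j + C l i j) - (Gm k j l + C k j l) * (Gm l i k + C l i k)
     = (Gm k k l * Gm l i j - Gm k j l * Gm l i k) + Gm k k l * C l i j + C k k l * Gm l i j + C k k l * C l i j
       - Gm k j l * C l i k - C k j l * Gm l i k - C k j l * C l i k" for i j k l
    by (simp add: algebra_simps)
  show ?thesis
    unfolding pw
    apply (simp only: sum.distrib sum_subtractf distrib_left right_diff_distrib)
    apply (simp only: T3 T6)
    apply (simp only: T1 T2 T4[OF Gms] T5[OF Gms])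
    by (simp add: algebra_simps)
qed

end


definition C1 :: "'n::finite pt set \<Rightarrow> ('n pt \<Rightarrow> real) \<Rightarrow> bool" where
  "C1 U f \<longleftrightarrow> (\<forall>y\<in>U. f differentiable (at y))"

definition C2 :: "'n::finite pt set \<Rightarrow> ('n pt \<Rightarrow> real) \<Rightarrow> bool" where
  "C2 U f \<longleftrightarrow> C1 U f \<and> (\<forall>j. C1 U (pd j f))"

lemma smooth_C2: "smooth_on U f \<Longrightarrow> C2 U f"
  unfolding smooth_on_def C2_def C1_def
proof (intro conjI allI ballI)
  fix y j assume a: "\<forall>is. \<forall>x\<in>U. pds is f differentiable at x" and y: "y \<in> U"
  have "pds [] f differentiable at y" using a y by blast
  then show "f differentiable at y" by simp
  have "pds [j] f differentiable at y" using a y by blast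
  then show "pd j f differentiable at y" by simp
qed

lemma C2_C1: "C2 U f \<Longrightarrow> C1 U f" by (simp add: C2_def)
lemma C1_D: "C1 U f \<Longrightarrow> y \<in> U \<Longrightarrow> f differentiable (at y)" by (simp add: C1_def)
lemma C2_D: "C2 U f \<Longrightarrow> y \<in> U \<Longrightarrow> f differentiable (at y)" by (simp add: C1_def C2_def)
lemma C2_Dpd: "C2 U f \<Longrightarrow> y \<in> U \<Longrightarrow> pd j f differentiable (at y)" by (simp add: C1_def C2_def)

definition ip :: "('n::finite pt \<Rightarrow> real^'n^'n) \<Rightarrow> ('n pt \<Rightarrow> real) \<Rightarrow> ('n pt \<Rightarrow> real) \<Rightarrow> 'n pt \<Rightarrow> real" where
  "ip g a b x = (\<Sum>k\<in>UNIV. \<Sum>l\<in>UNIV. ginv g x $ k $ l * pd k a x * pd l b x)"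

locale rmet =
  fixes U :: "'n::finite pt set" and g :: "'n pt \<Rightarrow> real^'n^'n"
  assumes opn: "open U" and rm: "riem_metric_on U g"
begin

lemma gC2: "C2 U (\<lambda>y. g y $ i $ j)"
  using rm smooth_C2 unfolding riem_metric_on_def by blast

lemma gsym: "x \<in> U \<Longrightarrow> g x $ i $ j = g x $ j $ i"
proof -
  assume x: "x \<in> U"
  then have "transpose (g x) = g x" using rm unfolding riem_metric_on_def by blast
  then have "transpose (g x) $ i $ j = g x $ i $ j" by simp
  then show ?thesis by (simp add: transpose_def)
qed

lemma ginv_inv: "x \<in> U \<Longrightarrow> g x ** ginv g x = mat 1 \<and> ginv g x ** g x = mat 1"
proof -
  assume x: "x \<in> U"
  have "\<forall>\<xi>. g x *v \<xi> = 0 \<longrightarrow> \<xi> = 0" using rm x unfolding riem_metric_on_def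
    by (metis inner_zero_right less_irrefl)
  then have "\<exists>B. B ** g x = mat 1" by (simp add: matrix_left_invertible_ker)
  then have "invertible (g x)" using invertible_left_inverse by blast
  then have "\<exists>A'. g x ** A' = mat 1 \<and> A' ** g x = mat 1" unfolding invertible_def .
  then show ?thesis unfolding ginv_def matrix_inv_def by (rule someI_ex)
qed

lemma det_nz: "x \<in> U \<Longrightarrow> det (g x) \<noteq> 0"
  using ginv_inv invertible_det_nz invertible_def by blast

lemma ginvL: "x \<in> U \<Longrightarrow> (\<Sum>l\<in>UNIV. ginv g x $ k $ l * g x $ l $ j) = (if k = j then 1 else 0)"
proof -
  assume x: "x \<in> U"
  have "(ginv g x ** g x) $ k $ j = mat 1 $ k $ j" using ginv_inv[OF x] by simp
  then show ?thesis by (simp add: matrix_matrix_mult_def mat_def)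
qed

lemma ginvR: "x \<in> U \<Longrightarrow> (\<Sum>l\<in>UNIV. g x $ k $ l * ginv g x $ l $ j) = (if k = j then 1 else 0)"
proof -
  assume x: "x \<in> U"
  have "(g x ** ginv g x) $ k $ j = mat 1 $ k $ j" using ginv_inv[OF x] by simp
  then show ?thesis by (simp add: matrix_matrix_mult_def mat_def)
qed

lemma ginvsym: "x \<in> U \<Longrightarrow> ginv g x $ i $ j = ginv g x $ j $ i"
proof -
  assume x: "x \<in> U"
  let ?G = "g x" and ?B = "ginv g x"
  have tG: "transpose ?G = ?G" using rm x unfolding riem_metric_on_def by blast
  have "transpose ?B ** ?G = transpose (?G ** ?B)" using tG by (metis matrix_transpose_mul)
  also have "\<dots> = mat 1" using ginv_inv[OF x] by (simp add: transpose_mat)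
  finally have h: "transpose ?B ** ?G = mat 1" .
  have "transpose ?B = transpose ?B ** (?G ** ?B)" using ginv_inv[OF x] by simp
  also have "\<dots> = ?B" using h by (simp add: matrix_mul_assoc)
  finally have "transpose ?B $ i $ j = ?B $ i $ j" by simp
  then show ?thesis by (simp add: transpose_def)
qed

lemma ginv_cramer: "x \<in> U \<Longrightarrow>
  ginv g x $ k $ l = det (\<chi> i j. if j = k then axis l 1 $ i else g x $ i $ j) / det (g x)"
proof -
  assume x: "x \<in> U"
  have "g x *v (ginv g x *v axis l 1) = axis l 1" using ginv_inv[OF x]
    by (simp add: matrix_vector_mul_assoc)
  then have "ginv g x *v axis l 1 = (\<chi> k. det(\<chi> i j. if j=k then axis l 1 $ i else g x $ i $ j) / det (g x))"
    using cramer[OF det_nz[OF x]] by blast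
  then have "(ginv g x *v axis l 1) $ k = det(\<chi> i j. if j=k then axis l 1 $ i else g x $ i $ j) / det (g x)"
    by simp
  moreover have "(ginv g x *v axis l 1) $ k = ginv g x $ k $ l"
    by (simp add: matrix_vector_mult_def axis_def if_distrib cong: if_cong)
  ultimately show ?thesis by simp
qed

lemma ginv_diff: "x \<in> U \<Longrightarrow> (\<lambda>y. ginv g y $ k $ l) differentiable (at x)"
proof -
  assume x: "x \<in> U"
  have "(\<lambda>y. det (\<chi> i j. if j = k then axis l 1 $ i else g y $ i $ j) / det (g y)) differentiable (at x)"
  proof (rule differentiable_divide)
    show "(\<lambda>y. det (\<chi> i j. if j = k then axis l 1 $ i else g y $ i $ j)) differentiable at x"
      by (rule det_differentiable) (case_tac "j = k", simp_all add: C2_D[OF gC2 x])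
    show "(\<lambda>y. det (g y)) differentiable at x"
      by (rule det_differentiable) (auto intro: C2_D[OF gC2 x])
    show "det (g x) \<noteq> 0" using det_nz[OF x] .
  qed
  then show ?thesis
    by (rule diff_local[OF opn x, rotated]) (simp add: ginv_cramer)
qed

lemma ginvC1: "C1 U (\<lambda>y. ginv g y $ k $ l)"
  using ginv_diff by (simp add: C1_def)

lemma pd_ginv: "x \<in> U \<Longrightarrow> pd a (\<lambda>y. ginv g y $ k $ m) x =
   - (\<Sum>l\<in>UNIV. \<Sum>j\<in>UNIV. ginv g x $ k $ l * pd a (\<lambda>y. g y $ l $ j) x * ginv g x $ j $ m)"
proof -
  assume x: "x \<in> U"
  have E: "(\<Sum>l\<in>UNIV. pd a (\<lambda>y. ginv g y $ k $ l) x * g x $ l $ j)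
        = - (\<Sum>l\<in>UNIV. ginv g x $ k $ l * pd a (\<lambda>y. g y $ l $ j) x)" for j
  proof -
    have "pd a (\<lambda>y. \<Sum>l\<in>UNIV. ginv g y $ k $ l * g y $ l $ j) x = pd a (\<lambda>y. if k = j then 1 else 0) x"
      by (rule pd_local[OF opn x]) (auto simp: ginvL intro!: differentiable_sum differentiable_mult ginv_diff[OF x] C2_D[OF gC2 x])
    also have "\<dots> = 0" by (simp add: pd_const)
    finally have "pd a (\<lambda>y. \<Sum>l\<in>UNIV. ginv g y $ k $ l * g y $ l $ j) x = 0" .
    moreover have "pd a (\<lambda>y. \<Sum>l\<in>UNIV. ginv g y $ k $ l * g y $ l $ j) x
       = (\<Sum>l\<in>UNIV. ginv g x $ k $ l * pd a (\<lambda>y. g y $ l $ j) x + pd a (\<lambda>y. ginv g y $ k $ l) x * g x $ l $ j)"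
      by (subst pd_sum) (auto intro!: sum.cong pd_mult differentiable_mult ginv_diff[OF x] C2_D[OF gC2 x])
    ultimately show ?thesis by (simp add: sum.distrib eq_neg_iff_add_eq_0 add.commute)
  qed
  have "pd a (\<lambda>y. ginv g y $ k $ m) x = (\<Sum>l\<in>UNIV. pd a (\<lambda>y. ginv g y $ k $ l) x * (if l = m then 1 else 0))"
    by (simp add: if_distrib cong: if_cong)
  also have "\<dots> = (\<Sum>l\<in>UNIV. pd a (\<lambda>y. ginv g y $ k $ l) x * (\<Sum>j\<in>UNIV. g x $ l $ j * ginv g x $ j $ m))"
    by (simp add: ginvR[OF x])
  also have "\<dots> = (\<Sum>j\<in>UNIV. (\<Sum>l\<in>UNIV. pd a (\<lambda>y. ginv g y $ k $ l) x * g x $ l $ j) * ginv g x $ j $ m)"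
    by (simp add: sum_distrib_left sum_distrib_right mult.assoc) (rule sum.swap)
  also have "\<dots> = (\<Sum>j\<in>UNIV. - (\<Sum>l\<in>UNIV. ginv g x $ k $ l * pd a (\<lambda>y. g y $ l $ j) x) * ginv g x $ j $ m)"
    by (simp add: E)
  also have "\<dots> = - (\<Sum>l\<in>UNIV. \<Sum>j\<in>UNIV. ginv g x $ k $ l * pd a (\<lambda>y. g y $ l $ j) x * ginv g x $ j $ m)"
    by (simp add: sum_distrib_right sum_negf) (rule sum.swap)
  finally show ?thesis .
qed


abbreviation dg where "dg l i j x \<equiv> pd l (\<lambda>y. g y $ i $ j) x"

lemma dg_sym: "x \<in> U \<Longrightarrow> dg l i j x = dg l j i x"
  by (rule pd_local[OF opn]) (auto simp: gsym C2_D[OF gC2])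

lemma chr_sym: "x \<in> U \<Longrightarrow> christoffel g k i j x = christoffel g k j i x"
  unfolding christoffel_def by (simp add: dg_sym[of x _ i j] algebra_simps)

lemma chr_diff: "x \<in> U \<Longrightarrow> christoffel g k i j differentiable (at x)"
proof -
  assume x: "x \<in> U"
  have "(\<lambda>x. (1/2) * (\<Sum>l\<in>UNIV. ginv g x $ k $ l *
      (pd i (\<lambda>y. g y $ j $ l) x + pd j (\<lambda>y. g y $ i $ l) x - pd l (\<lambda>y. g y $ i $ j) x))) differentiable (at x)"
    by (intro differentiable_mult differentiable_const differentiable_sum ballI finite_UNIV
        differentiable_add differentiable_diff ginv_diff[OF x] C2_Dpd[OF gC2 x]) simp_all
  then show ?thesis by (simp add: christoffel_def[abs_def])
qed

lemma Gam_contr: "x \<in> U \<Longrightarrow> (\<Sum>k\<in>UNIV. christoffel g k k l x)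
   = (1/2) * (\<Sum>k\<in>UNIV. \<Sum>a\<in>UNIV. ginv g x $ k $ a * dg l k a x)"
proof -
  assume x: "x \<in> U"
  have sw: "(\<Sum>k\<in>UNIV. \<Sum>a\<in>UNIV. ginv g x $ k $ a * dg k l a x) = (\<Sum>k\<in>UNIV. \<Sum>a\<in>UNIV. ginv g x $ k $ a * dg a k l x)"
    apply (subst sum.swap)
    by (simp add: ginvsym[OF x, of _ ] dg_sym[OF x])
  show ?thesis unfolding christoffel_def
    by (simp add: sum_distrib_left[symmetric] sum.distrib sum_subtractf algebra_simps sum_divide_distrib[symmetric] sw)
qed


abbreviation ipd where "ipd a b x \<equiv> ip g a b x"

lemma ipd_sym: "x \<in> U \<Longrightarrow> ipd a b x = ipd b a x"
  unfolding ip_def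
  apply (subst sum.swap)
  by (simp add: ginvsym[of x] mult_ac)

lemma gdot_grad: "x \<in> U \<Longrightarrow> gdot g x (grad g a x) (grad g b x) = ipd a b x"
proof -
  assume x: "x \<in> U"
  have "g x *v grad g b x = (\<chi> i. pd i b x)"
    using ginv_inv[OF x] by (simp add: grad_def matrix_vector_mul_assoc)
  then have "gdot g x (grad g a x) (grad g b x) = grad g a x \<bullet> (\<chi> i. pd i b x)" by (simp add: gdot_def)
  also have "\<dots> = ipd a b x"
    unfolding grad_def ip_def inner_vec_def matrix_vector_mult_def
    apply (simp add: sum_distrib_left sum_distrib_right)
    apply (rule trans[OF sum.swap])
    by (simp add: ginvsym[OF x] mult_ac)
  finally show ?thesis .
qed

lemma gdot_sym: "x \<in> U \<Longrightarrow> gdot g x a b = gdot g x b a"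
proof -
  assume x: "x \<in> U"
  show ?thesis unfolding gdot_def inner_vec_def matrix_vector_mult_def
    apply (simp add: sum_distrib_left mult_ac)
    apply (subst sum.swap)
    by (simp add: gsym[OF x] mult_ac)
qed

lemma ginvL': "x \<in> U \<Longrightarrow> (\<Sum>l\<in>UNIV. ginv g x $ k $ l * g x $ j $ l) = (if k = j then 1 else 0)"
  using ginvL[of x k j] by (simp add: gsym[of x j])

lemma trace_n: "x \<in> U \<Longrightarrow> (\<Sum>i\<in>UNIV. \<Sum>j\<in>UNIV. ginv g x $ i $ j * g x $ i $ j) = real CARD('n)"
  using ginvL'[of x] by simp

lemma C2_prod: "C2 U a \<Longrightarrow> C2 U b \<Longrightarrow> C2 U (\<lambda>y. a y * b y)"
proof -
  assume a: "C2 U a" and b: "C2 U b"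
  show ?thesis unfolding C2_def C1_def
  proof (intro conjI ballI allI)
    fix y assume y: "y \<in> U"
    show "(\<lambda>y. a y * b y) differentiable at y" by (intro differentiable_mult C2_D[OF a y] C2_D[OF b y])
  next
    fix j y assume y: "y \<in> U"
    have "(\<lambda>z. a z * pd j b z + pd j a z * b z) differentiable at y"
      by (intro differentiable_add differentiable_mult C2_D[OF a y] C2_D[OF b y] C2_Dpd[OF a y] C2_Dpd[OF b y])
    then show "pd j (\<lambda>y. a y * b y) differentiable at y"
      by (rule diff_local[OF opn y, rotated]) (simp add: pd_mult C2_D[OF a] C2_D[OF b])
  qed
qed

lemma C2_exp: "C2 U f \<Longrightarrow> C2 U (\<lambda>y. exp (f y))"
proof -
  assume a: "C2 U f"
  show ?thesis unfolding C2_def C1_def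
  proof (intro conjI ballI allI)
    fix y assume y: "y \<in> U"
    show "(\<lambda>y. exp (f y)) differentiable at y" by (intro diff_exp C2_D[OF a y])
  next
    fix j y assume y: "y \<in> U"
    have "(\<lambda>z. exp (f z) * pd j f z) differentiable at y"
      by (intro differentiable_mult diff_exp C2_D[OF a y] C2_Dpd[OF a y])
    then show "pd j (\<lambda>y. exp (f y)) differentiable at y"
      by (rule diff_local[OF opn y, rotated]) (simp add: pd_exp C2_D[OF a])
  qed
qed

lemma pd_const_fun: "pd j (\<lambda>y. c) = (\<lambda>x. 0)"
  by (rule ext) (rule pd_const)

lemma C2_const: "C2 U (\<lambda>y. c)"
  by (simp add: C2_def C1_def pd_const_fun)

lemma C2_cmult: "C2 U f \<Longrightarrow> C2 U (\<lambda>y. c * f y)"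
  using C2_prod[OF C2_const, of f c] by simp

lemma pdpd_prod: "C2 U a \<Longrightarrow> C2 U b \<Longrightarrow> x \<in> U \<Longrightarrow>
  pd i (pd j (\<lambda>y. a y * b y)) x = a x * pd i (pd j b) x + pd i a x * pd j b x + pd j a x * pd i b x + pd i (pd j a) x * b x"
proof -
  assume a: "C2 U a" and b: "C2 U b" and x: "x \<in> U"
  have "pd i (pd j (\<lambda>y. a y * b y)) x = pd i (\<lambda>z. a z * pd j b z + pd j a z * b z) x"
    by (rule pd_local[OF opn x, symmetric])
       (auto simp: pd_mult C2_D[OF a] C2_D[OF b] intro!: differentiable_add differentiable_mult C2_D[OF a x] C2_D[OF b x] C2_Dpd[OF a x] C2_Dpd[OF b x])
  also have "\<dots> = a x * pd i (pd j b) x + pd i a x * pd j b x + (pd j a x * pd i b x + pd i (pd j a) x * b x)"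
    by (simp add: pd_add pd_mult differentiable_mult C2_D[OF a x] C2_D[OF b x] C2_Dpd[OF a x] C2_Dpd[OF b x])
  finally show ?thesis by simp
qed

lemma lap_prod: "C2 U a \<Longrightarrow> C2 U b \<Longrightarrow> x \<in> U \<Longrightarrow>
   lap g (\<lambda>y. a y * b y) x = a x * lap g b x + b x * lap g a x + 2 * ipd a b x"
proof -
  assume a: "C2 U a" and b: "C2 U b" and x: "x \<in> U"
  have pk: "pd k (\<lambda>y. a y * b y) x = a x * pd k b x + pd k a x * b x" for k
    by (simp add: pd_mult C2_D[OF a x] C2_D[OF b x])
  have "lap g (\<lambda>y. a y * b y) x = a x * lap g b x + b x * lap g a x
      + ((\<Sum>i\<in>UNIV. \<Sum>j\<in>UNIV. ginv g x $ i $ j * pd i a x * pd j b x) + (\<Sum>i\<in>UNIV. \<Sum>j\<in>UNIV. ginv g x $ i $ j * pd j a x * pd i b x))"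
    unfolding lap_def pdpd_prod[OF a b x] pk
    by (simp add: algebra_simps sum.distrib sum_subtractf sum_distrib_left)
  also have "(\<Sum>i\<in>UNIV. \<Sum>j\<in>UNIV. ginv g x $ i $ j * pd j a x * pd i b x) = ipd a b x"
    unfolding ip_def
    apply (rule trans[OF sum.swap])
    by (simp add: ginvsym[OF x])
  finally show ?thesis by (simp add: ip_def)
qed

lemma ipd_prod: "C2 U a \<Longrightarrow> C2 U b \<Longrightarrow> x \<in> U \<Longrightarrow>
   ipd f (\<lambda>y. a y * b y) x = a x * ipd f b x + b x * ipd f a x"
  by (simp add: ip_def pd_mult C2_D algebra_simps sum.distrib sum_distrib_left)

lemma pd_expc: "C2 U f \<Longrightarrow> x \<in> U \<Longrightarrow> pd k (\<lambda>y. exp (c * f y)) x = exp (c * f x) * (c * pd k f x)"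
  by (simp add: pd_exp pd_cmult C2_D differentiable_mult)

lemma lap_expc: "C2 U f \<Longrightarrow> x \<in> U \<Longrightarrow>
   lap g (\<lambda>y. exp (c * f y)) x = exp (c * f x) * (c * lap g f x + c\<^sup>2 * ipd f f x)"
proof -
  assume a: "C2 U f" and x: "x \<in> U"
  have ca: "C2 U (\<lambda>y. c * f y)" by (rule C2_cmult[OF a])
  have pj: "pd i (pd j (\<lambda>y. exp (c * f y))) x = exp (c * f x) * (c * pd i (pd j f) x + c * pd i f x * (c * pd j f x))" for i j
  proof -
    have "pd i (pd j (\<lambda>y. exp (c * f y))) x = pd i (\<lambda>y. exp (c * f y) * (c * pd j f y)) x"
      by (rule pd_local[OF opn x, symmetric])
         (auto simp: pd_expc[OF a] intro!: differentiable_mult diff_exp C2_D[OF ca x] C2_Dpd[OF a x] differentiable_const)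
    also have "\<dots> = exp (c * f x) * (c * pd i (pd j f) x) + exp (c * f x) * (c * pd i f x) * (c * pd j f x)"
      by (subst pd_mult) (auto simp: pd_expc[OF a x] pd_cmult C2_Dpd[OF a x] intro!: differentiable_mult diff_exp C2_D[OF ca x] C2_Dpd[OF a x])
    finally show ?thesis by (simp add: algebra_simps)
  qed
  show ?thesis unfolding lap_def pj pd_expc[OF a x]
    by (simp add: ip_def algebra_simps sum.distrib sum_subtractf sum_distrib_left power2_eq_square)
qed

lemma grad_prod: "C2 U a \<Longrightarrow> C2 U b \<Longrightarrow> x \<in> U \<Longrightarrow>
   grad g (\<lambda>y. a y * b y) x = a x *\<^sub>R grad g b x + b x *\<^sub>R grad g a x"
  unfolding grad_def
  by (simp add: pd_mult C2_D vec_eq_iff matrix_vector_mult_def algebra_simps sum.distrib sum_distrib_left)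

lemma grad_expc: "C2 U f \<Longrightarrow> x \<in> U \<Longrightarrow> grad g (\<lambda>y. exp (c * f y)) x = (exp (c * f x) * c) *\<^sub>R grad g f x"
  unfolding grad_def
  by (simp add: pd_expc vec_eq_iff matrix_vector_mult_def algebra_simps sum_distrib_left)

lemma ipd_expc: "C2 U f \<Longrightarrow> x \<in> U \<Longrightarrow> ipd h (\<lambda>y. exp (c * f y)) x = exp (c * f x) * c * ipd h f x"
  by (simp add: ip_def pd_expc algebra_simps sum_distrib_left)

lemma ipd_prod_l: "C2 U a \<Longrightarrow> C2 U b \<Longrightarrow> x \<in> U \<Longrightarrow>
   ipd (\<lambda>y. a y * b y) f x = a x * ipd b f x + b x * ipd a f x"
  using ipd_prod[of a b x f] ipd_sym[of x] by metis

lemma ipd_expc_l: "C2 U f \<Longrightarrow> x \<in> U \<Longrightarrow> ipd (\<lambda>y. exp (c * f y)) h x = exp (c * f x) * c * ipd f h x"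
  using ipd_expc[of f x h c] ipd_sym[of x] by metis

lemma gdot_scaleR_r: "gdot g x a (c *\<^sub>R b) = c * gdot g x a b"
  by (simp add: gdot_def matrix_vector_mult_scaleR)

lemma gdot_scaleR_l: "gdot g x (c *\<^sub>R a) b = c * gdot g x a b"
  by (simp add: gdot_def)

lemma gdot_add_r: "gdot g x a (b + d) = gdot g x a b + gdot g x a d"
  by (simp add: gdot_def matrix_vector_right_distrib inner_add_right)

lemma part1:
  assumes x: "x \<in> U" and v0: "v x > 0" and mne: "m + real CARD('n) - 1 \<noteq> 0" and n3: "CARD('n) \<ge> 3"
  shows "(real CARD('n) + 2*w - 2) *\<^sub>R tDW g m mu v w u x
          - (m + real CARD('n) + 2*w - 2) *\<^sub>R tD g w u x
        = (- m / v x * tmetric g x (tD g w u x)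
              (tJ g v x + ((mu - (m - 1) * tmetric g x (tJ g v x) (tJ g v x))
                             / (2 * (m + real CARD('n) - 1) * v x)) *\<^sub>R tX)) *\<^sub>R tX"
proof -
  define n where "n = real CARD('n)"
  define D where "D = m + n - 1"
  have D0: "D \<noteq> 0" using mne by (simp add: D_def n_def)
  have n0: "n \<noteq> 0" "n - 1 \<noteq> 0" using n3 by (simp_all add: n_def)
  have mnD: "m + n - 1 = D" by (simp add: D_def)
  have sJ: "scal g x = (2 * n - 2) * schJ g x" using n0 by (simp add: schJ_def n_def)
  show ?thesis
    unfolding tDW_def tD_def tJ_def tX_def tmetric_def wlap_def JW_def Rmphi_def Let_def n_def[symmetric]
    apply (simp only: prod.case scaleR_Pair gdot_scaleR_r gdot_scaleR_l gdot_grad[OF x] ipd_sym[OF x, of u v] mnD sJ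
       diff_Pair add_Pair prod.inject real_scaleR_def gdot_add_r)
    apply (intro conjI)
    subgoal by simp
    subgoal by (simp add: scaleR_scaleR mult.commute)
    subgoal
    proof -
      have z: "gdot g x a 0 = 0" for a by (simp add: gdot_def)
      have vv: "v x \<noteq> 0" using v0 by simp
      show ?thesis using vv D0 n0 by (simp add: z power2_eq_square field_simps) (simp add: D_def algebra_simps)
    qed
    done
qed

end


locale conf = rmet U g for U :: "'n::finite pt set" and g +
  fixes s :: "'n pt \<Rightarrow> real"
  assumes sC2: "C2 U s"
begin

abbreviation gc where "gc \<equiv> (\<lambda>y. exp (2 * s y) *\<^sub>R g y)"

abbreviation hh where "hh k y \<equiv> (\<Sum>l\<in>UNIV. ginv g y $ k $ l * pd l s y)"

definition Cf where "Cf k i j y = (if k = i then pd j s y else 0) + (if k = j then pd i s y else 0) - g y $ i $ j * hh k y"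

lemma ginv_gc: "y \<in> U \<Longrightarrow> ginv gc y = exp (-2 * s y) *\<^sub>R ginv g y"
proof -
  assume y: "y \<in> U"
  let ?c = "exp (2 * s y)" and ?G = "g y" and ?B = "ginv g y"
  have c: "exp (-2 * s y) = inverse ?c" by (simp add: exp_minus[symmetric])
  have e1: "(?c *\<^sub>R ?G) ** (inverse ?c *\<^sub>R ?B) = mat 1"
    using ginv_inv[OF y] by (simp add: matrix_scalar_ac scalar_matrix_assoc[symmetric])
  have e2: "(inverse ?c *\<^sub>R ?B) ** (?c *\<^sub>R ?G) = mat 1"
    using ginv_inv[OF y] by (simp add: matrix_scalar_ac scalar_matrix_assoc[symmetric])
  have "\<exists>A'. (?c *\<^sub>R ?G) ** A' = mat 1 \<and> A' ** (?c *\<^sub>R ?G) = mat 1" using e1 e2 by blast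
  then have "(?c *\<^sub>R ?G) ** ginv gc y = mat 1 \<and> ginv gc y ** (?c *\<^sub>R ?G) = mat 1"
    unfolding ginv_def matrix_inv_def by (rule someI_ex)
  then have "ginv gc y = ginv gc y ** ((?c *\<^sub>R ?G) ** (inverse ?c *\<^sub>R ?B))" using e1 by simp
  also have "\<dots> = inverse ?c *\<^sub>R ?B"
    using \<open>(?c *\<^sub>R ?G) ** ginv gc y = mat 1 \<and> ginv gc y ** (?c *\<^sub>R ?G) = mat 1\<close>
    by (simp add: matrix_mul_assoc)
  finally show ?thesis using c by simp
qed

lemma ginv_gc_ent: "y \<in> U \<Longrightarrow> ginv gc y $ k $ l = exp (-2 * s y) * ginv g y $ k $ l"
  by (simp add: ginv_gc)

lemma dgc: "x \<in> U \<Longrightarrow> pd l (\<lambda>y. exp (2 * s y) * g y $ i $ j) x = exp (2 * s x) * (2 * pd l s x * g x $ i $ j + dg l i j x)"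
proof -
  assume x: "x \<in> U"
  have "pd l (\<lambda>y. exp (2 * s y) * g y $ i $ j) x = exp (2 * s x) * dg l i j x + exp (2 * s x) * (2 * pd l s x) * g x $ i $ j"
    by (subst pd_mult) (auto simp: pd_exp pd_cmult diff_exp differentiable_mult C2_D[OF sC2 x] C2_D[OF gC2 x])
  then show ?thesis by (simp add: algebra_simps)
qed


lemma chr_gc1: "x \<in> U \<Longrightarrow> christoffel gc k i j x = christoffel g k i j x +
   (\<Sum>l\<in>UNIV. ginv g x $ k $ l * (pd i s x * g x $ j $ l + pd j s x * g x $ i $ l - pd l s x * g x $ i $ j))"
proof -
  assume x: "x \<in> U"
  have e: "exp (-2 * s x) * exp (2 * s x) = 1" by (simp add: mult_exp_exp)
  have "christoffel gc k i j x = (1/2) * (\<Sum>l\<in>UNIV. (exp (-2 * s x) * exp (2 * s x)) * (ginv g x $ k $ l *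
      (dg i j l x + dg j i l x - dg l i j x) + 2 * (ginv g x $ k $ l * (pd i s x * g x $ j $ l + pd j s x * g x $ i $ l - pd l s x * g x $ i $ j))))"
    unfolding christoffel_def vector_scaleR_component real_scaleR_def
    apply (simp only: ginv_gc_ent[OF x] dgc[OF x])
    by (simp add: algebra_simps)
  also have "\<dots> = christoffel g k i j x +
   (\<Sum>l\<in>UNIV. ginv g x $ k $ l * (pd i s x * g x $ j $ l + pd j s x * g x $ i $ l - pd l s x * g x $ i $ j))"
    unfolding e christoffel_def by (simp add: sum.distrib sum_subtractf sum_distrib_left algebra_simps)
  finally show ?thesis .
qed

lemma chr_gc: "x \<in> U \<Longrightarrow> christoffel gc k i j x = christoffel g k i j x + Cf k i j x"
proof -
  assume x: "x \<in> U"
  have "(\<Sum>l\<in>UNIV. ginv g x $ k $ l * (pd i s x * g x $ j $ l + pd j s x * g x $ i $ l - pd l s x * g x $ i $ j))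
     = pd i s x * (\<Sum>l\<in>UNIV. ginv g x $ k $ l * g x $ j $ l) + pd j s x * (\<Sum>l\<in>UNIV. ginv g x $ k $ l * g x $ i $ l)
       - g x $ i $ j * hh k x"
    by (simp add: sum.distrib sum_subtractf sum_distrib_left algebra_simps)
  also have "\<dots> = Cf k i j x" by (simp add: ginvL'[OF x] Cf_def)
  finally show ?thesis using chr_gc1[OF x] by simp
qed


lemma Cf_contr: "(\<Sum>k\<in>UNIV. Cf k i j x * F k) = F i * pd j s x + F j * pd i s x - g x $ i $ j * (\<Sum>k\<in>UNIV. hh k x * F k)"
proof -
  have "(\<Sum>k\<in>UNIV. Cf k i j x * F k) = (\<Sum>k\<in>UNIV. (if k = i then pd j s x * F k else 0) + (if k = j then pd i s x * F k else 0)
     - g x $ i $ j * (hh k x * F k))"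
    by (rule sum.cong) (auto simp: Cf_def algebra_simps)
  also have "\<dots> = F i * pd j s x + F j * pd i s x - g x $ i $ j * (\<Sum>k\<in>UNIV. hh k x * F k)"
    by (simp add: sum.distrib sum_subtractf sum_distrib_left[symmetric] mult.commute)
  finally show ?thesis .
qed

lemma hh_F: "x \<in> U \<Longrightarrow> (\<Sum>k\<in>UNIV. hh k x * pd k f x) = ipd s f x"
  unfolding ip_def
  apply (simp add: sum_distrib_right)
  apply (rule trans[OF sum.swap])
  by (simp add: ginvsym[of x] mult_ac)

lemma lap_gc: "x \<in> U \<Longrightarrow> lap gc f x = exp (-2 * s x) * (lap g f x + (real CARD('n) - 2) * ipd s f x)"
proof -
  assume x: "x \<in> U"
  have "lap gc f x = exp (-2 * s x) * (\<Sum>i\<in>UNIV. \<Sum>j\<in>UNIV. ginv g x $ i $ j *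
      (pd i (pd j f) x - (\<Sum>k\<in>UNIV. christoffel g k i j x * pd k f x) - (\<Sum>k\<in>UNIV. Cf k i j x * pd k f x)))"
    unfolding lap_def
    apply (simp only: ginv_gc_ent[OF x] chr_gc[OF x])
    by (simp add: sum_distrib_left algebra_simps sum.distrib sum_subtractf)
  also have "\<dots> = exp (-2 * s x) * (lap g f x - (\<Sum>i\<in>UNIV. \<Sum>j\<in>UNIV. ginv g x $ i $ j * (\<Sum>k\<in>UNIV. Cf k i j x * pd k f x)))"
    unfolding lap_def by (simp add: algebra_simps sum.distrib sum_subtractf)
  also have "(\<Sum>i\<in>UNIV. \<Sum>j\<in>UNIV. ginv g x $ i $ j * (\<Sum>k\<in>UNIV. Cf k i j x * pd k f x))
     = ipd f s x + ipd s f x - (\<Sum>i\<in>UNIV. \<Sum>j\<in>UNIV. ginv g x $ i $ j * g x $ i $ j) * ipd s f x"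
  proof -
    define P where "P = ipd s f x"
    have hP: "(\<Sum>k\<in>UNIV. hh k x * pd k f x) = P" by (simp add: P_def hh_F[OF x])
    show ?thesis unfolding Cf_contr hP P_def[symmetric]
      by (simp add: algebra_simps sum.distrib sum_subtractf sum_distrib_left sum_distrib_right) (simp add: P_def ip_def mult_ac)
  qed
  also have "\<dots> = (2 - real CARD('n)) * ipd s f x"
    by (simp only: trace_n[OF x] ipd_sym[OF x, of f s]) (simp add: algebra_simps)
  finally show ?thesis by (simp add: algebra_simps)
qed


lemma Cf_alt: "Cf k i j = (\<lambda>y. (if k = i then 1 else 0) * pd j s y + (if k = j then 1 else 0) * pd i s y - g y $ i $ j * hh k y)"
  by (rule ext) (simp add: Cf_def)

lemma hh_diff: "x \<in> U \<Longrightarrow> hh k differentiable (at x)"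
  by (intro differentiable_sum differentiable_mult ballI finite_UNIV ginv_diff C2_Dpd[OF sC2]) simp_all

lemma Cf_diff: "x \<in> U \<Longrightarrow> Cf k i j differentiable (at x)"
  unfolding Cf_alt
  by (intro differentiable_diff differentiable_add differentiable_mult differentiable_const hh_diff C2_Dpd[OF sC2] C2_D[OF gC2]) simp_all

lemma pd_chr_gc: "x \<in> U \<Longrightarrow> pd a (christoffel gc k i j) x = pd a (christoffel g k i j) x + pd a (Cf k i j) x"
proof -
  assume x: "x \<in> U"
  have "pd a (\<lambda>y. christoffel g k i j y + Cf k i j y) x = pd a (christoffel gc k i j) x"
    by (rule pd_local[OF opn x]) (auto simp: chr_gc intro!: differentiable_add chr_diff[OF x] Cf_diff[OF x])
  moreover have "pd a (\<lambda>y. christoffel g k i j y + Cf k i j y) x = pd a (christoffel g k i j) x + pd a (Cf k i j) x"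
    using pd_add[OF chr_diff[OF x] Cf_diff[OF x]] by simp
  ultimately show ?thesis by simp
qed

lemma pd_Cf: "x \<in> U \<Longrightarrow> pd a (Cf k i j) x = (if k = i then pd a (pd j s) x else 0) + (if k = j then pd a (pd i s) x else 0)
    - (dg a i j x * hh k x + g x $ i $ j * pd a (hh k) x)"
proof -
  assume x: "x \<in> U"
  have d1: "(\<lambda>y. (if k = i then 1 else 0) * pd j s y) differentiable (at x)" for k i j
    by (intro differentiable_mult differentiable_const C2_Dpd[OF sC2 x])
  have d2: "(\<lambda>y. g y $ i $ j * hh k y) differentiable (at x)"
    by (intro differentiable_mult C2_D[OF gC2 x] hh_diff[OF x])
  show ?thesis unfolding Cf_alt
    apply (subst pd_diff[OF differentiable_add[OF d1 d1] d2])
    apply (subst pd_add[OF d1 d1])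
    apply (subst pd_cmult[OF C2_Dpd[OF sC2 x]])+
    apply (subst pd_mult[OF C2_D[OF gC2 x] hh_diff[OF x]])
    by simp
qed

lemma sum_Cf_kik: "y \<in> U \<Longrightarrow> (\<Sum>k\<in>UNIV. Cf k i k y) = real CARD('n) * pd i s y"
proof -
  assume y: "y \<in> U"
  have "(\<Sum>k\<in>UNIV. g y $ i $ k * hh k y) = (\<Sum>l\<in>UNIV. (\<Sum>k\<in>UNIV. g y $ i $ k * ginv g y $ k $ l) * pd l s y)"
    by (simp add: sum_distrib_left sum_distrib_right mult.assoc) (rule sum.swap)
  also have "\<dots> = pd i s y" by (simp add: ginvR[OF y])
  finally have e: "(\<Sum>k\<in>UNIV. g y $ i $ k * hh k y) = pd i s y" .
  have "(\<Sum>k\<in>UNIV. Cf k i k y) = (\<Sum>k\<in>UNIV. (if k = i then pd k s y else 0) + pd i s y - g y $ i $ k * hh k y)"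
    by (rule sum.cong) (auto simp: Cf_def)
  also have "\<dots> = pd i s y + real CARD('n) * pd i s y - pd i s y"
    by (simp add: sum.distrib sum_subtractf e)
  finally show ?thesis by simp
qed

lemma sum_pd_Cf_kik: "x \<in> U \<Longrightarrow> (\<Sum>k\<in>UNIV. pd j (Cf k i k) x) = real CARD('n) * pd j (pd i s) x"
proof -
  assume x: "x \<in> U"
  have "(\<Sum>k\<in>UNIV. pd j (Cf k i k) x) = pd j (\<lambda>y. \<Sum>k\<in>UNIV. Cf k i k y) x"
    by (rule pd_sum[symmetric]) (auto intro: Cf_diff[OF x])
  also have "\<dots> = pd j (\<lambda>y. real CARD('n) * pd i s y) x"
    by (rule pd_local[OF opn x]) (auto simp: sum_Cf_kik intro!: differentiable_sum Cf_diff[OF x])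
  also have "\<dots> = real CARD('n) * pd j (pd i s) x" by (rule pd_cmult[OF C2_Dpd[OF sC2 x]])
  finally show ?thesis .
qed


lemma pd_hh: "x \<in> U \<Longrightarrow> pd a (hh k) x = (\<Sum>l\<in>UNIV. ginv g x $ k $ l * pd a (pd l s) x) + (\<Sum>l\<in>UNIV. pd a (\<lambda>y. ginv g y $ k $ l) x * pd l s x)"
proof -
  assume x: "x \<in> U"
  have "pd a (hh k) x = (\<Sum>l\<in>UNIV. pd a (\<lambda>y. ginv g y $ k $ l * pd l s y) x)"
    by (rule pd_sum) (auto intro!: differentiable_mult ginv_diff[OF x] C2_Dpd[OF sC2 x])
  also have "\<dots> = (\<Sum>l\<in>UNIV. ginv g x $ k $ l * pd a (pd l s) x + pd a (\<lambda>y. ginv g y $ k $ l) x * pd l s x)"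
    by (rule sum.cong[OF refl], rule pd_mult[OF ginv_diff[OF x] C2_Dpd[OF sC2 x]])
  finally show ?thesis by (simp add: sum.distrib)
qed

lemma div_hh: "x \<in> U \<Longrightarrow> (\<Sum>k\<in>UNIV. pd k (hh k) x)
   = (\<Sum>i\<in>UNIV. \<Sum>j\<in>UNIV. ginv g x $ i $ j * pd i (pd j s) x)
     - (\<Sum>i\<in>UNIV. \<Sum>j\<in>UNIV. \<Sum>l\<in>UNIV. ginv g x $ i $ j * hh l x * dg i j l x)"
proof -
  assume x: "x \<in> U"
  have "(\<Sum>k\<in>UNIV. \<Sum>l\<in>UNIV. pd k (\<lambda>y. ginv g y $ k $ l) x * pd l s x)
      = - (\<Sum>k\<in>UNIV. \<Sum>l\<in>UNIV. \<Sum>p\<in>UNIV. \<Sum>q\<in>UNIV. ginv g x $ k $ p * dg k p q x * ginv g x $ q $ l * pd l s x)"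
    by (simp add: pd_ginv[OF x] sum_distrib_right sum_negf)
  also have "\<dots> = - (\<Sum>k\<in>UNIV. \<Sum>p\<in>UNIV. \<Sum>q\<in>UNIV. \<Sum>l\<in>UNIV. ginv g x $ k $ p * dg k p q x * ginv g x $ q $ l * pd l s x)"
    by (rule arg_cong[where f=uminus], rule sum.cong[OF refl], rule sw3b)
  also have "\<dots> = - (\<Sum>i\<in>UNIV. \<Sum>j\<in>UNIV. \<Sum>l\<in>UNIV. ginv g x $ i $ j * hh l x * dg i j l x)"
    by (simp add: sum_distrib_left mult_ac)
  finally have e: "(\<Sum>k\<in>UNIV. \<Sum>l\<in>UNIV. pd k (\<lambda>y. ginv g y $ k $ l) x * pd l s x)
      = - (\<Sum>i\<in>UNIV. \<Sum>j\<in>UNIV. \<Sum>l\<in>UNIV. ginv g x $ i $ j * hh l x * dg i j l x)" .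
  show ?thesis by (simp add: pd_hh[OF x] sum.distrib e)
qed


abbreviation Ga where "Ga k i j x \<equiv> christoffel g k i j x"

lemma ricci_gc: "x \<in> U \<Longrightarrow> ricci gc i j x = ricci g i j x + (\<Sum>k\<in>UNIV. pd k (Cf k i j) x) - real CARD('n) * pd j (pd i s) x
   + ((\<Sum>k\<in>UNIV. \<Sum>l\<in>UNIV. (Ga k k l x + Cf k k l x) * (Ga l i j x + Cf l i j x) - (Ga k j l x + Cf k j l x) * (Ga l i k x + Cf l i k x))
      - (\<Sum>k\<in>UNIV. \<Sum>l\<in>UNIV. Ga k k l x * Ga l i j x - Ga k j l x * Ga l i k x))"
proof -
  assume x: "x \<in> U"
  have "ricci gc i j x = (\<Sum>k\<in>UNIV. pd k (christoffel g k i j) x + pd k (Cf k i j) x - (pd j (christoffel g k i k) x + pd j (Cf k i k) x)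
      + (\<Sum>l\<in>UNIV. (Ga k k l x + Cf k k l x) * (Ga l i j x + Cf l i j x) - (Ga k j l x + Cf k j l x) * (Ga l i k x + Cf l i k x)))"
    unfolding ricci_def by (simp only: chr_gc[OF x] pd_chr_gc[OF x])
  also have "\<dots> = ricci g i j x + (\<Sum>k\<in>UNIV. pd k (Cf k i j) x) - (\<Sum>k\<in>UNIV. pd j (Cf k i k) x)
   + ((\<Sum>k\<in>UNIV. \<Sum>l\<in>UNIV. (Ga k k l x + Cf k k l x) * (Ga l i j x + Cf l i j x) - (Ga k j l x + Cf k j l x) * (Ga l i k x + Cf l i k x))
      - (\<Sum>k\<in>UNIV. \<Sum>l\<in>UNIV. Ga k k l x * Ga l i j x - Ga k j l x * Ga l i k x))"
    unfolding ricci_def by (simp only: sum.distrib sum_subtractf)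
  finally show ?thesis by (simp add: sum_pd_Cf_kik[OF x])
qed


context
  fixes x assumes x: "x \<in> U"
begin

interpretation A: alg "\<lambda>i j. ginv g x $ i $ j" "\<lambda>i j. g x $ i $ j" "\<lambda>l. pd l s x"
  by unfold_locales (rule ginvsym[OF x], rule gsym[OF x], rule ginvL[OF x])

lemma Cf_C: "Cf k i j x = A.C k i j"
  by (simp add: Cf_def A.C_def A.h_def)

lemma A_h: "A.h l = hh l x" by (simp add: A.h_def)

abbreviation "P1 \<equiv> (\<Sum>i\<in>UNIV. \<Sum>j\<in>UNIV. ginv g x $ i $ j * pd i (pd j s) x)"
abbreviation "P2 \<equiv> (\<Sum>i\<in>UNIV. \<Sum>j\<in>UNIV. \<Sum>l\<in>UNIV. ginv g x $ i $ j * hh l x * dg i j l x)"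
abbreviation "P3 \<equiv> (\<Sum>i\<in>UNIV. \<Sum>j\<in>UNIV. \<Sum>l\<in>UNIV. ginv g x $ i $ j * hh l x * dg l i j x)"

lemma P1_sym: "(\<Sum>i\<in>UNIV. \<Sum>j\<in>UNIV. ginv g x $ i $ j * pd j (pd i s) x) = P1"
  apply (rule trans[OF sum.swap])
  by (simp add: ginvsym[OF x])

lemma L_contr: "(\<Sum>i\<in>UNIV. \<Sum>j\<in>UNIV. ginv g x $ i $ j * (\<Sum>k\<in>UNIV. pd k (Cf k i j) x))
    = 2 * P1 - P3 - real CARD('n) * (P1 - P2)"
proof -
  have pw: "(\<Sum>k\<in>UNIV. pd k (Cf k i j) x) = pd i (pd j s) x + pd j (pd i s) x
       - (\<Sum>k\<in>UNIV. dg k i j x * hh k x) - g x $ i $ j * (\<Sum>k\<in>UNIV. pd k (hh k) x)" for i j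
    by (simp add: pd_Cf[OF x] sum.distrib sum_subtractf sum_distrib_left)
  have e3: "(\<Sum>i\<in>UNIV. \<Sum>j\<in>UNIV. ginv g x $ i $ j * (\<Sum>k\<in>UNIV. dg k i j x * hh k x)) = P3"
    by (simp add: sum_distrib_left mult_ac)
  have "(\<Sum>i\<in>UNIV. \<Sum>j\<in>UNIV. ginv g x $ i $ j * (\<Sum>k\<in>UNIV. pd k (Cf k i j) x))
      = P1 + (\<Sum>i\<in>UNIV. \<Sum>j\<in>UNIV. ginv g x $ i $ j * pd j (pd i s) x)
        - (\<Sum>i\<in>UNIV. \<Sum>j\<in>UNIV. ginv g x $ i $ j * (\<Sum>k\<in>UNIV. dg k i j x * hh k x))
        - (\<Sum>i\<in>UNIV. \<Sum>j\<in>UNIV. ginv g x $ i $ j * g x $ i $ j) * (\<Sum>k\<in>UNIV. pd k (hh k) x)"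
    unfolding pw by (simp add: algebra_simps sum.distrib sum_subtractf sum_distrib_right)
  also have "\<dots> = 2 * P1 - P3 - real CARD('n) * (P1 - P2)"
    unfolding P1_sym e3 trace_n[OF x] div_hh[OF x] by simp
  finally show ?thesis .
qed


lemma Gl_h: "(\<Sum>l\<in>UNIV. A.Gl (\<lambda>k i j. Ga k i j x) l * A.h l) = P3 / 2"
proof -
  define H where "H = (\<lambda>l. hh l x)"
  have Hl: "\<And>l. A.h l = H l" "\<And>l. hh l x = H l" by (simp_all add: H_def A_h)
  have "(\<Sum>l\<in>UNIV. A.Gl (\<lambda>k i j. Ga k i j x) l * A.h l)
     = (1/2) * (\<Sum>l\<in>UNIV. \<Sum>k\<in>UNIV. \<Sum>a\<in>UNIV. ginv g x $ k $ a * H l * dg l k a x)"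
    unfolding A.Gl_def Hl Gam_contr[OF x]
    by (simp add: sum_distrib_right sum_distrib_left mult_ac)
  also have "\<dots> = (1/2) * (\<Sum>k\<in>UNIV. \<Sum>a\<in>UNIV. \<Sum>l\<in>UNIV. ginv g x $ k $ a * H l * dg l k a x)"
    by (subst sw3b) simp
  also have "\<dots> = P3 / 2" unfolding Hl by simp
  finally show ?thesis .
qed

lemma gam_s: "(\<Sum>l\<in>UNIV. pd l s x * A.gam (\<lambda>k i j. Ga k i j x) l) = P2 - P3 / 2"
proof -
  define H where "H = (\<lambda>l. hh l x)"
  have Hl: "\<And>l. hh l x = H l" by (simp_all add: H_def)
  have Ha: "\<And>a. (\<Sum>l\<in>UNIV. ginv g x $ l $ a * pd l s x) = H a" by (simp add: H_def ginvsym[OF x])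
  have "(\<Sum>l\<in>UNIV. pd l s x * A.gam (\<lambda>k i j. Ga k i j x) l)
     = (1/2) * (\<Sum>l\<in>UNIV. \<Sum>i\<in>UNIV. \<Sum>j\<in>UNIV. \<Sum>a\<in>UNIV. ginv g x $ i $ j * (ginv g x $ l $ a * pd l s x)
          * (dg i j a x + dg j i a x - dg a i j x))"
    by (simp add: A.gam_def christoffel_def sum_distrib_left sum_distrib_right mult_ac)
  also have "\<dots> = (1/2) * (\<Sum>i\<in>UNIV. \<Sum>j\<in>UNIV. \<Sum>a\<in>UNIV. \<Sum>l\<in>UNIV. ginv g x $ i $ j * (ginv g x $ l $ a * pd l s x)
          * (dg i j a x + dg j i a x - dg a i j x))"
    by (subst sw4b) simp
  also have "\<dots> = (1/2) * (\<Sum>i\<in>UNIV. \<Sum>j\<in>UNIV. \<Sum>a\<in>UNIV. ginv g x $ i $ j * (\<Sum>l\<in>UNIV. ginv g x $ l $ a * pd l s x)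
          * (dg i j a x + dg j i a x - dg a i j x))"
    by (simp add: sum_distrib_left sum_distrib_right mult_ac)
  also have "\<dots> = (1/2) * (\<Sum>i\<in>UNIV. \<Sum>j\<in>UNIV. \<Sum>a\<in>UNIV. ginv g x $ i $ j * H a
          * (dg i j a x + dg j i a x - dg a i j x))"
    unfolding Ha ..
  also have "\<dots> = (P2 + (\<Sum>i\<in>UNIV. \<Sum>j\<in>UNIV. \<Sum>a\<in>UNIV. ginv g x $ i $ j * hh a x * dg j i a x) - P3) / 2"
    unfolding Hl by (simp add: algebra_simps sum.distrib sum_subtractf)
  also have "(\<Sum>i\<in>UNIV. \<Sum>j\<in>UNIV. \<Sum>a\<in>UNIV. ginv g x $ i $ j * hh a x * dg j i a x) = P2"
    unfolding Hl
    apply (rule trans[OF sum.swap])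
    by (simp add: ginvsym[OF x])
  finally show ?thesis by (simp add: field_simps)
qed

lemma lap_s: "lap g s x = P1 - (P2 - P3 / 2)"
proof -
  have "lap g s x = P1 - (\<Sum>i\<in>UNIV. \<Sum>j\<in>UNIV. \<Sum>k\<in>UNIV. ginv g x $ i $ j * Ga k i j x * pd k s x)"
    by (simp add: lap_def algebra_simps sum_subtractf sum_distrib_left)
  also have "(\<Sum>i\<in>UNIV. \<Sum>j\<in>UNIV. \<Sum>k\<in>UNIV. ginv g x $ i $ j * Ga k i j x * pd k s x)
      = (\<Sum>l\<in>UNIV. pd l s x * A.gam (\<lambda>k i j. Ga k i j x) l)"
    apply (rule trans[OF sw3])
    by (simp add: A.gam_def sum_distrib_left mult_ac)
  finally show ?thesis by (simp add: gam_s)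
qed

lemma S_ipd: "(\<Sum>l\<in>UNIV. pd l s x * A.h l) = ipd s s x"
  by (simp add: ip_def A_h sum_distrib_left mult_ac)


lemma scal_gc: "scal gc x = exp (-2 * s x) * (scal g x - 2 * (real CARD('n) - 1) * lap g s x
    - (real CARD('n) - 1) * (real CARD('n) - 2) * ipd s s x)"
proof -
  let ?n = "real CARD('n)"
  let ?B = "\<lambda>i j. ginv g x $ i $ j"
  let ?Gm = "\<lambda>k i j. Ga k i j x"
  define Q1 where "Q1 i j = (\<Sum>k\<in>UNIV. \<Sum>l\<in>UNIV. (?Gm k k l + A.C k k l) * (?Gm l i j + A.C l i j) - (?Gm k j l + A.C k j l) * (?Gm l i k + A.C l i k))" for i j
  define Q0 where "Q0 i j = (\<Sum>k\<in>UNIV. \<Sum>l\<in>UNIV. ?Gm k k l * ?Gm l i j - ?Gm k j l * ?Gm l i k)" for i j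
  define Lk where "Lk i j = (\<Sum>k\<in>UNIV. pd k (Cf k i j) x)" for i j
  have r: "ricci gc i j x = ricci g i j x + Lk i j - ?n * pd j (pd i s) x + (Q1 i j - Q0 i j)" for i j
    unfolding ricci_gc[OF x] Q1_def Q0_def Lk_def Cf_C ..
  have s1: "scal gc x = exp (-2 * s x) * (\<Sum>i\<in>UNIV. \<Sum>j\<in>UNIV. ?B i j * ricci gc i j x)"
    unfolding scal_def by (simp add: ginv_gc_ent[OF x] sum_distrib_left mult.assoc)
  have s2: "(\<Sum>i\<in>UNIV. \<Sum>j\<in>UNIV. ?B i j * ricci gc i j x)
      = scal g x + (\<Sum>i\<in>UNIV. \<Sum>j\<in>UNIV. ?B i j * Lk i j) - ?n * (\<Sum>i\<in>UNIV. \<Sum>j\<in>UNIV. ?B i j * pd j (pd i s) x)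
        + ((\<Sum>i\<in>UNIV. \<Sum>j\<in>UNIV. ?B i j * Q1 i j) - (\<Sum>i\<in>UNIV. \<Sum>j\<in>UNIV. ?B i j * Q0 i j))"
    unfolding r scal_def
    by (simp only: distrib_left right_diff_distrib sum.distrib sum_subtractf sum_distrib_left mult.left_commute[of "?n"])
  have q: "(\<Sum>i\<in>UNIV. \<Sum>j\<in>UNIV. ?B i j * Q1 i j) = (\<Sum>i\<in>UNIV. \<Sum>j\<in>UNIV. ?B i j * Q0 i j)
         + (2 - ?n) * (\<Sum>l\<in>UNIV. A.Gl ?Gm l * A.h l)
         + (?n - 2) * (\<Sum>l\<in>UNIV. pd l s x * A.gam ?Gm l)
         - (?n - 1) * (?n - 2) * (\<Sum>l\<in>UNIV. pd l s x * A.h l)"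
    unfolding Q1_def Q0_def by (rule A.Qcontr) (rule chr_sym[OF x])
  have L: "(\<Sum>i\<in>UNIV. \<Sum>j\<in>UNIV. ?B i j * Lk i j) = 2 * P1 - P3 - ?n * (P1 - P2)"
    unfolding Lk_def by (rule L_contr)
  have "(\<Sum>i\<in>UNIV. \<Sum>j\<in>UNIV. ?B i j * ricci gc i j x)
     = scal g x - 2 * (?n - 1) * lap g s x - (?n - 1) * (?n - 2) * ipd s s x"
    unfolding s2 q L P1_sym Gl_h gam_s S_ipd lap_s by (simp add: field_simps)
  then show ?thesis using s1 by simp
qed

end


lemma gdot_gc: "gdot gc y a b = exp (2 * s y) * gdot g y a b"
  by (simp add: gdot_def scaleR_matrix_vector_assoc[symmetric])

lemma grad_gc: "y \<in> U \<Longrightarrow> grad gc f y = exp (-2 * s y) *\<^sub>R grad g f y"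
  by (simp add: grad_def ginv_gc scaleR_matrix_vector_assoc)

lemma ipd_gc: "x \<in> U \<Longrightarrow> gdot gc x (grad gc a x) (grad gc b x) = exp (-2 * s x) * ipd a b x"
proof -
  assume x: "x \<in> U"
  have "gdot gc x (grad gc a x) (grad gc b x) = exp (2 * s x) * (exp (-2 * s x) * (exp (-2 * s x) * ipd a b x))"
    by (simp add: gdot_gc grad_gc[OF x] gdot_scaleR_r gdot_scaleR_l gdot_grad[OF x])
  also have "\<dots> = (exp (2 * s x) * exp (-2 * s x)) * exp (-2 * s x) * ipd a b x" by (simp add: mult_ac)
  also have "exp (2 * s x) * exp (-2 * s x) = 1" by (simp add: mult_exp_exp)
  finally show ?thesis by simp
qed


lemma tDW_rescale:
  assumes uC2: "C2 U u" and vC2: "C2 U v" and vpos: "\<forall>y\<in>U. v y > 0"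
    and mne: "m + real CARD('n) - 1 \<noteq> 0" and x: "x \<in> U"
  shows "tDW gc m mu (\<lambda>y. exp (s y) * v y) w (\<lambda>y. exp (w * s y) * u y) x = tractor_rescale g (w - 1) s x (tDW g m mu v w u x)"
proof -
  define e where "e = exp (s x)"
  define E where "E = exp (w * s x)"
  have e0: "e > 0" and E0: "E > 0" by (simp_all add: e_def E_def)
  have v0: "v x > 0" using vpos x by blast
  have ex1: "exp ((w - 1) * s x) = E / e"
    unfolding e_def E_def by (simp add: exp_diff[symmetric] algebra_simps)
  have ee: "exp (s x) * exp (s x) * exp (-2 * s x) = 1" by (simp add: mult_exp_exp)
  have ex2: "exp (- s x) = 1 / e" "exp (-2 * s x) = 1 / (e * e)" "exp (s x) = e" "exp (w * s x) = E"
    using ee e0 by (simp_all add: e_def E_def exp_minus field_simps power2_eq_square)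
  have eC2: "C2 U (\<lambda>y. exp (s y))" by (rule C2_exp[OF sC2])
  have EC2: "C2 U (\<lambda>y. exp (w * s y))" by (rule C2_exp[OF C2_cmult[OF sC2]])
  have lap1: "lap g (\<lambda>y. exp (s y)) x = exp (s x) * (lap g s x + ipd s s x)"
    using lap_expc[OF sC2 x, of 1] by simp
  have ipd1: "ipd h (\<lambda>y. exp (s y)) x = exp (s x) * ipd h s x" for h
    using ipd_expc[OF sC2 x, of h 1] by simp
  have ipd1l: "ipd (\<lambda>y. exp (s y)) h x = exp (s x) * ipd s h x" for h
    using ipd_expc_l[OF sC2 x, of 1 h] by simp
  have gradE: "grad g (\<lambda>y. exp (w * s y)) x = (exp (w * s x) * w) *\<^sub>R grad g s x"
    by (rule grad_expc[OF sC2 x])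
  have topeq: "w * (m + real CARD('n) + 2 * w - 2) * (exp (w * s x) * u x) =
     exp ((w - 1) * s x) *\<^sub>R (exp (s x) * (w * (m + real CARD('n) + 2 * w - 2) * u x))"
    unfolding ex1 ex2 using e0 by (simp add: field_simps)
  have mideq: "(m + real CARD('n) + 2 * w - 2) *\<^sub>R grad gc (\<lambda>y. exp (w * s y) * u y) x =
     exp ((w - 1) * s x) *\<^sub>R exp (- s x) *\<^sub>R
     ((m + real CARD('n) + 2 * w - 2) *\<^sub>R grad g u x + (w * (m + real CARD('n) + 2 * w - 2) * u x) *\<^sub>R grad g s x)"
    unfolding grad_gc[OF x] grad_prod[OF EC2 uC2 x] gradE ex1 ex2
    using e0 by (simp add: vec_eq_iff field_simps)
  define D where "D = 2 * (m + real CARD('n) - 1)"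
  have D0: "D \<noteq> 0" using mne by (simp add: D_def)
  have JWgc: "JW gc m mu (\<lambda>y. exp (s y) * v y) x = (1 / (e * e)) * (JW g m mu v x - lap g s x
      - m * ipd s v x / v x - (m + real CARD('n) - 2) / 2 * ipd s s x)"
    unfolding JW_def Rmphi_def D_def[symmetric]
    apply (simp only: ipd_gc[OF x] lap_gc[OF x] scal_gc[OF x] gdot_grad[OF x])
    apply (simp only: lap_prod[OF eC2 vC2 x] lap1
       ipd_prod[OF eC2 vC2 x] ipd_prod_l[OF eC2 vC2 x] ipd1 ipd1l)
    apply (simp only: ipd_sym[OF x, of v s] ex2)
    using e0 v0 D0 by (simp add: field_simps power2_eq_square) (simp add: D_def algebra_simps)
  have boteq: "- (wlap gc m (\<lambda>y. exp (s y) * v y) (\<lambda>y. exp (w * s y) * u y) x +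
        w * JW gc m mu (\<lambda>y. exp (s y) * v y) x * (exp (w * s x) * u x)) =
     exp ((w - 1) * s x) *\<^sub>R
     (exp (- s x) *
      (- (wlap g m v u x + w * JW g m mu v x * u x) -
       gdot g x (grad g s x) ((m + real CARD('n) + 2 * w - 2) *\<^sub>R grad g u x) -
       1 / 2 * gdot g x (grad g s x) (grad g s x) * (w * (m + real CARD('n) + 2 * w - 2) * u x)))"
    unfolding wlap_def JWgc
    apply (simp only: ipd_gc[OF x] lap_gc[OF x] gdot_scaleR_r gdot_grad[OF x] real_scaleR_def)
    apply (simp only: lap_prod[OF EC2 uC2 x] lap_expc[OF sC2 x]
       ipd_prod[OF EC2 uC2 x] ipd_prod_l[OF eC2 vC2 x] ipd_prod_l[OF EC2 uC2 x]
       ipd_expc[OF sC2 x] ipd_expc_l[OF sC2 x] ipd1 ipd1l)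
    apply (simp only: ipd_sym[OF x, of u s] ipd_sym[OF x, of v s] ipd_sym[OF x, of u v] ex1 ex2)
    using e0 v0 by (simp add: field_simps power2_eq_square)
  show ?thesis
    unfolding tDW_def tractor_rescale_def Let_def
    apply (simp only: prod.case scaleR_Pair prod.inject)
    apply (intro conjI topeq mideq boteq)
    done
qed

end

theorem lemma5p9:
  fixes U :: "(real ^ 'n::finite) set"
    and g :: "real ^ 'n \<Rightarrow> real ^ 'n ^ 'n"
    and v u :: "real ^ 'n \<Rightarrow> real"
    and m mu w :: real
  assumes "open U"
    and "CARD('n) \<ge> 3"
    and "m \<noteq> - real CARD('n)" and "m \<noteq> 1 - real CARD('n)" and "m \<noteq> 2 - real CARD('n)"
    and "riem_metric_on U g"
    and "smooth_on U v" and "\<forall>x\<in>U. v x > 0"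
    and "smooth_on U u"
  shows
    "(\<forall>x\<in>U.
        (real CARD('n) + 2*w - 2) *\<^sub>R tDW g m mu v w u x
          - (m + real CARD('n) + 2*w - 2) *\<^sub>R tD g w u x
        = (- m / v x * tmetric g x (tD g w u x)
              (tJ g v x + ((mu - (m - 1) * tmetric g x (tJ g v x) (tJ g v x))
                             / (2 * (m + real CARD('n) - 1) * v x)) *\<^sub>R tX)) *\<^sub>R tX)
     \<and> (\<forall>s. smooth_on U s \<longrightarrow>
          (\<forall>x\<in>U. tDW (\<lambda>y. exp (2 * s y) *\<^sub>R g y) m mu (\<lambda>y. exp (s y) * v y) w
                      (\<lambda>y. exp (w * s y) * u y) x
                  = tractor_rescale g (w - 1) s x (tDW g m mu v w u x)))"
proof -
  interpret rmet U g by unfold_locales (fact assms(1), fact assms(6))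
  have uC2: "C2 U u" by (rule smooth_C2[OF assms(9)])
  have vC2: "C2 U v" by (rule smooth_C2[OF assms(7)])
  have mne: "m + real CARD('n) - 1 \<noteq> 0" using assms(4) by linarith
  show ?thesis
  proof (intro conjI ballI allI impI)
    fix x assume x: "x \<in> U"
    have v0: "v x > 0" using assms(8) x by blast
    show "(real CARD('n) + 2*w - 2) *\<^sub>R tDW g m mu v w u x
          - (m + real CARD('n) + 2*w - 2) *\<^sub>R tD g w u x
        = (- m / v x * tmetric g x (tD g w u x)
              (tJ g v x + ((mu - (m - 1) * tmetric g x (tJ g v x) (tJ g v x))
                             / (2 * (m + real CARD('n) - 1) * v x)) *\<^sub>R tX)) *\<^sub>R tX"
      by (rule part1[of x v m, OF x v0 mne assms(2)])
  next
    fix s x assume s: "smooth_on U s" and x: "x \<in> U"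
    interpret conf U g s by unfold_locales (rule smooth_C2[OF s])
    show "tDW (\<lambda>y. exp (2 * s y) *\<^sub>R g y) m mu (\<lambda>y. exp (s y) * v y) w (\<lambda>y. exp (w * s y) * u y) x
                  = tractor_rescale g (w - 1) s x (tDW g m mu v w u x)"
      by (rule tDW_rescale[OF uC2 vC2 assms(8) mne x])
  qed
qed

end
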